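(* Assume complete randomization, let $\mathcal Q_{\mathrm U}=\{q:N_q=1\}$ with $N_{\mathrm U}=|\mathcal Q_{\mathrm U}|$, and let $\{\langle g\rangle\}_{g=1}^G$ be a grouping of $\mathcal Q_{\mathrm U}$. Assume Conditions 3 and 6. Let $(w_q)_{q\in\mathcal Q_{\mathrm U}}$ be reals with $\max_q|w_q|\le\overline w$ and $\hat v=\sum_{g=1}^G\sum_{q\in\langle g\rangle}w_q(Y_q-\hat Y_{\langle g\rangle})^2$. There is a universal constant $C>0$ such that for all $t>0$, $$\mathbb P\{|\hat v-\mathbb E\hat v|\ge t\}\le\frac{C\overline w^2(\Delta^4+\Delta^2\zeta^2)N_{\mathrm U}}{t^2}.$$
   Context: Randomization model: $N$ units, $Q$ treatment levels, group sizes $N_1,\dots,N_Q\ge1$ with $\sum_qN_q=N$; unit $i$ has fixed real potential outcomes $Y_i(q)$. Under complete randomization $Z$ is uniform over all vectors in $[Q]^N$ with exactly $N_q$ coordinates equal to $q$; $Y_i=Y_i(Z_i)$. For $q$ with $N_q=1$, $Y_q$ denotes the observed outcome of the unit assigned to $q$. $\overline Y(q)=N^{-1}\sum_iY_i(q)$. Grouping: a fixed (data-independent) partition $\mathcal Q_{\mathrm U}=\bigcup_{g=1}^G\langle g\rangle$ into disjoint groups with $|\langle g\rangle|\ge2$; $\hat Y_{\langle g\rangle}=|\langle g\rangle|^{-1}\sum_{q\in\langle g\rangle}Y_q$, $\overline Y_{\langle g\rangle}=|\langle g\rangle|^{-1}\sum_{q\in\langle g\rangle}\overline Y(q)$. Condition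 3: $\max_qN^{-1}\sum_i\{Y_i(q)-\overline Y(q)\}^4\le\Delta^4$. Condition 6: $\max_g\max_{q\in\langle g\rangle}|\overline Y(q)-\overline Y_{\langle g\rangle}|\le\zeta$. *)

theory Defs
  imports "HOL-Analysis.Analysis"
begin

text \<open>Units are 0..<N, treatment levels are 0..<Q. Potential outcomes Y i q.
  Complete randomization: Z uniform over assignments with exactly Nq q units at level q.\<close>

definition assignments :: "nat \<Rightarrow> nat \<Rightarrow> (nat \<Rightarrow> nat) \<Rightarrow> (nat \<Rightarrow> nat) set" where
  "assignments N Q Nq = {z \<in> {..<N} \<rightarrow>\<^sub>E {..<Q}. \<forall>q<Q. card {i\<in>{..<N}. z i = q} = Nq q}"

definition prob_cr :: "nat \<Rightarrow> nat \<Rightarrow> (nat \<Rightarrow> nat) \<Rightarrow> ((nat \<Rightarrow> nat) \<Rightarrow> bool) \<Rightarrow> real" where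
  "prob_cr N Q Nq E = real (card {z \<in> assignments N Q Nq. E z}) / real (card (assignments N Q Nq))"

definition expect_cr :: "nat \<Rightarrow> nat \<Rightarrow> (nat \<Rightarrow> nat) \<Rightarrow> ((nat \<Rightarrow> nat) \<Rightarrow> real) \<Rightarrow> real" where
  "expect_cr N Q Nq f = (\<Sum>z\<in>assignments N Q Nq. f z) / real (card (assignments N Q Nq))"

definition QU :: "nat \<Rightarrow> (nat \<Rightarrow> nat) \<Rightarrow> nat set" where
  "QU Q Nq = {q. q < Q \<and> Nq q = 1}"

definition Yobs :: "nat \<Rightarrow> (nat \<Rightarrow> nat \<Rightarrow> real) \<Rightarrow> (nat \<Rightarrow> nat) \<Rightarrow> nat \<Rightarrow> real" where
  "Yobs N Y z q = Y (THE i. i < N \<and> z i = q) q"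

definition Yhat_grp :: "nat \<Rightarrow> (nat \<Rightarrow> nat \<Rightarrow> real) \<Rightarrow> (nat \<Rightarrow> nat) \<Rightarrow> nat set \<Rightarrow> real" where
  "Yhat_grp N Y z A = (\<Sum>q\<in>A. Yobs N Y z q) / real (card A)"

definition vhat :: "nat \<Rightarrow> (nat \<Rightarrow> nat \<Rightarrow> real) \<Rightarrow> nat \<Rightarrow> (nat \<Rightarrow> nat set) \<Rightarrow> (nat \<Rightarrow> real)
    \<Rightarrow> (nat \<Rightarrow> nat) \<Rightarrow> real" where
  "vhat N Y G grp w z = (\<Sum>g<G. \<Sum>q\<in>grp g. w q * (Yobs N Y z q - Yhat_grp N Y z (grp g))^2)"

definition Ybar :: "nat \<Rightarrow> (nat \<Rightarrow> nat \<Rightarrow> real) \<Rightarrow> nat \<Rightarrow> real" where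
  "Ybar N Y q = (\<Sum>i<N. Y i q) / real N"

definition Ybar_grp :: "nat \<Rightarrow> (nat \<Rightarrow> nat \<Rightarrow> real) \<Rightarrow> nat set \<Rightarrow> real" where
  "Ybar_grp N Y A = (\<Sum>q\<in>A. Ybar N Y q) / real (card A)"

end

theory Submission
  imports Defs
begin


definition unitz :: "nat \<Rightarrow> (nat \<Rightarrow> nat) \<Rightarrow> nat \<Rightarrow> nat" where
  "unitz N z q = (THE i. i < N \<and> z i = q)"

definition InjS :: "nat \<Rightarrow> nat set \<Rightarrow> (nat \<Rightarrow> nat) set" where
  "InjS N V = {k \<in> V \<rightarrow>\<^sub>E {..<N}. inj_on k V}"

lemma unitz_props:
  assumes "z \<in> assignments N Q Nq" "q \<in> QU Q Nq"
  shows "unitz N z q < N" "z (unitz N z q) = q" "\<And>i. i < N \<Longrightarrow> z i = q \<Longrightarrow> i = unitz N z q"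
proof -
  have q: "q < Q" "Nq q = 1" using assms(2) unfolding QU_def by auto
  have "\<forall>q<Q. card {i\<in>{..<N}. z i = q} = Nq q" using assms(1) unfolding assignments_def by blast
  then have "card {i\<in>{..<N}. z i = q} = 1" using q by metis
  then obtain i0 where i0: "{i\<in>{..<N}. z i = q} = {i0}" by (rule card_1_singletonE)
  have m: "\<And>i. i \<in> {i\<in>{..<N}. z i = q} \<longleftrightarrow> i = i0" using i0 by blast
  have a: "i0 < N" "z i0 = q" using m[of i0] by auto
  have u: "\<And>i. i<N \<Longrightarrow> z i = q \<Longrightarrow> i = i0" using m by blast
  have e: "unitz N z q = i0" unfolding unitz_def using a u by (intro the_equality) blast+
  show "unitz N z q < N" "z (unitz N z q) = q" using a e by simp_all
  show "\<And>i. i < N \<Longrightarrow> z i = q \<Longrightarrow> i = unitz N z q" using u e by blast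
qed

lemma finite_assign: "finite (assignments N Q Nq)"
proof -
  have "assignments N Q Nq \<subseteq> {..<N} \<rightarrow>\<^sub>E {..<Q}" unfolding assignments_def by auto
  then show ?thesis by (rule finite_subset) (simp add: finite_PiE)
qed

lemma finite_InjS: "finite V \<Longrightarrow> finite (InjS N V)"
  unfolding InjS_def by (rule finite_subset[of _ "V \<rightarrow>\<^sub>E {..<N}"]) (auto simp: finite_PiE)

lemma finite_QU: "finite (QU Q Nq)"
  unfolding QU_def by (rule finite_subset[of _ "{..<Q}"]) auto

lemma rz_Inj:
  assumes "z \<in> assignments N Q Nq" "V \<subseteq> QU Q Nq"
  shows "restrict (unitz N z) V \<in> InjS N V"
proof -
  have "inj_on (unitz N z) V"
  proof (rule inj_onI)
    fix x y assume "x \<in> V" "y \<in> V" "unitz N z x = unitz N z y"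
    then show "x = y" using unitz_props(2)[OF assms(1)] assms(2) by (metis subsetD)
  qed
  then show ?thesis using unitz_props(1)[OF assms(1)] assms(2) unfolding InjS_def by auto
qed

lemma perm_exists:
  assumes "k \<in> InjS N V" "k' \<in> InjS N V" "finite V"
  shows "\<exists>\<sigma>. bij_betw \<sigma> {..<N} {..<N} \<and> (\<forall>v\<in>V. \<sigma> (k v) = k' v)"
proof -
  define K where "K = k ` V"
  define K' where "K' = k' ` V"
  have inj: "inj_on k V" "inj_on k' V" and sub: "K \<subseteq> {..<N}" "K' \<subseteq> {..<N}"
    using assms by (auto simp: InjS_def K_def K'_def PiE_def Pi_def)
  have cK: "card K = card V" "card K' = card V" using inj by (auto simp: K_def K'_def card_image)
  have fK: "finite K" "finite K'" using sub by (auto intro: finite_subset)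
  have "card ({..<N} - K) = card ({..<N} - K')" using sub cK fK
    by (simp add: card_Diff_subset)
  then obtain \<rho> where \<rho>: "bij_betw \<rho> ({..<N} - K) ({..<N} - K')"
    using finite_same_card_bij[of "{..<N} - K" "{..<N} - K'"] by auto
  define \<tau> where "\<tau> = (\<lambda>i. k' (the_inv_into V k i))"
  have b1: "bij_betw k V K" "bij_betw k' V K'" using inj by (auto simp: K_def K'_def bij_betw_def)
  have "bij_betw \<tau> K K'" unfolding \<tau>_def
    using bij_betw_trans[OF bij_betw_the_inv_into[OF b1(1)] b1(2)] by (simp add: comp_def)
  define \<sigma> where "\<sigma> = (\<lambda>i. if i \<in> K then \<tau> i else \<rho> i)"
  have s1: "bij_betw \<sigma> K K'" using \<open>bij_betw \<tau> K K'\<close> by (subst bij_betw_cong[of K \<sigma> \<tau>]) (auto simp: \<sigma>_def)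
  have s2: "bij_betw \<sigma> ({..<N} - K) ({..<N} - K')" using \<rho> by (subst bij_betw_cong[of _ \<sigma> \<rho>]) (auto simp: \<sigma>_def)
  have "bij_betw \<sigma> (K \<union> ({..<N} - K)) (K' \<union> ({..<N} - K'))"
    by (rule bij_betw_combine[OF s1 s2]) auto
  moreover have "K \<union> ({..<N} - K) = {..<N}" "K' \<union> ({..<N} - K') = {..<N}" using sub by auto
  moreover have "\<forall>v\<in>V. \<sigma> (k v) = k' v"
    using inj by (auto simp: \<sigma>_def \<tau>_def K_def the_inv_into_f_f)
  ultimately show ?thesis by auto
qed

lemma assign_unitz_eq:
  assumes "z \<in> assignments N Q Nq" "q \<in> QU Q Nq" "i < N" "z i = q"
  shows "unitz N z q = i"
  using unitz_props(3)[OF assms(1,2) assms(3,4)] by simp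

lemma fiber_le:
  assumes V: "V \<subseteq> QU Q Nq" and k: "k \<in> InjS N V" "k' \<in> InjS N V"
  shows "card {z \<in> assignments N Q Nq. restrict (unitz N z) V = k}
       \<le> card {z \<in> assignments N Q Nq. restrict (unitz N z) V = k'}"
proof -
  let ?A = "assignments N Q Nq"
  have fV: "finite V" using V finite_QU finite_subset by blast
  obtain \<sigma> where \<sigma>: "bij_betw \<sigma> {..<N} {..<N}" and \<sigma>k: "\<forall>v\<in>V. \<sigma> (k v) = k' v"
    using perm_exists[OF k fV] by blast
  define \<sigma>' where "\<sigma>' = the_inv_into {..<N} \<sigma>"
  have \<sigma>'b: "bij_betw \<sigma>' {..<N} {..<N}" unfolding \<sigma>'_def by (rule bij_betw_the_inv_into[OF \<sigma>])
  have inj\<sigma>: "inj_on \<sigma> {..<N}" using \<sigma> bij_betw_def by blast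
  have \<sigma>lt: "\<And>i. i < N \<Longrightarrow> \<sigma> i < N" using \<sigma> bij_betwE by blast
  have \<sigma>'lt: "\<And>i. i < N \<Longrightarrow> \<sigma>' i < N" using \<sigma>'b bij_betwE by blast
  have c1: "\<And>j. j < N \<Longrightarrow> \<sigma>' (\<sigma> j) = j" unfolding \<sigma>'_def using inj\<sigma> by (simp add: the_inv_into_f_f)
  have c2: "\<And>i. i < N \<Longrightarrow> \<sigma> (\<sigma>' i) = i" unfolding \<sigma>'_def
    by (rule f_the_inv_into_f_bij_betw[OF \<sigma>]) simp
  define \<Phi> :: "(nat \<Rightarrow> nat) \<Rightarrow> nat \<Rightarrow> nat" where "\<Phi> = (\<lambda>z. restrict (\<lambda>i. z (\<sigma>' i)) {..<N})"
  have \<Phi>A: "\<Phi> z \<in> ?A" if z: "z \<in> ?A" for z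
  proof -
    have zP: "z \<in> {..<N} \<rightarrow>\<^sub>E {..<Q}" and zc: "\<forall>q<Q. card {i\<in>{..<N}. z i = q} = Nq q"
      using z unfolding assignments_def by blast+
    have "\<Phi> z \<in> {..<N} \<rightarrow>\<^sub>E {..<Q}" unfolding \<Phi>_def using zP \<sigma>'lt by (auto simp: PiE_def Pi_def)
    moreover have "card {i\<in>{..<N}. \<Phi> z i = q} = Nq q" if "q < Q" for q
    proof -
      have "{i\<in>{..<N}. \<Phi> z i = q} = \<sigma> ` {j\<in>{..<N}. z j = q}"
      proof (intro set_eqI iffI)
        fix i assume "i \<in> {i\<in>{..<N}. \<Phi> z i = q}"
        then have "i < N" "z (\<sigma>' i) = q" unfolding \<Phi>_def by auto
        then show "i \<in> \<sigma> ` {j\<in>{..<N}. z j = q}" using c2[of i] \<sigma>'lt[of i]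
          by (metis (mono_tags, lifting) image_eqI lessThan_iff mem_Collect_eq)
      next
        fix i assume "i \<in> \<sigma> ` {j\<in>{..<N}. z j = q}"
        then obtain j where "j < N" "z j = q" "i = \<sigma> j" by auto
        then show "i \<in> {i\<in>{..<N}. \<Phi> z i = q}" unfolding \<Phi>_def using c1[of j] \<sigma>lt[of j] by auto
      qed
      moreover have "card (\<sigma> ` {j\<in>{..<N}. z j = q}) = card {j\<in>{..<N}. z j = q}"
        by (rule card_image) (rule inj_on_subset[OF inj\<sigma>], auto)
      ultimately show ?thesis using zc that by simp
    qed
    ultimately show ?thesis unfolding assignments_def by blast
  qed
  have \<Phi>u: "unitz N (\<Phi> z) q = \<sigma> (unitz N z q)" if z: "z \<in> ?A" and q: "q \<in> QU Q Nq" for z q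
  proof -
    have "unitz N z q < N" "z (unitz N z q) = q" using unitz_props(1,2)[OF z q] by auto
    then have "\<sigma> (unitz N z q) < N" "\<Phi> z (\<sigma> (unitz N z q)) = q" unfolding \<Phi>_def using c1 \<sigma>lt by auto
    then show ?thesis using assign_unitz_eq[OF \<Phi>A[OF z] q] by simp
  qed
  have "\<Phi> ` {z \<in> ?A. restrict (unitz N z) V = k} \<subseteq> {z \<in> ?A. restrict (unitz N z) V = k'}"
  proof
    fix y assume "y \<in> \<Phi> ` {z \<in> ?A. restrict (unitz N z) V = k}"
    then obtain z where z: "z \<in> ?A" "restrict (unitz N z) V = k" and y: "y = \<Phi> z" by auto
    have "restrict (unitz N (\<Phi> z)) V = k'"
    proof (rule ext)
      fix v show "restrict (unitz N (\<Phi> z)) V v = k' v"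
      proof (cases "v \<in> V")
        case True
        have "unitz N z v = k v" using z(2) True by (metis restrict_apply')
        then show ?thesis using True \<Phi>u[OF z(1)] V \<sigma>k by auto
      next
        case False then show ?thesis using k(2) unfolding InjS_def by (auto simp: PiE_def extensional_def)
      qed
    qed
    then show "y \<in> {z \<in> ?A. restrict (unitz N z) V = k'}" using y \<Phi>A[OF z(1)] by auto
  qed
  moreover have "inj_on \<Phi> {z \<in> ?A. restrict (unitz N z) V = k}"
  proof (rule inj_onI)
    fix z1 z2 assume z1: "z1 \<in> {z \<in> ?A. restrict (unitz N z) V = k}" and z2: "z2 \<in> {z \<in> ?A. restrict (unitz N z) V = k}"
      and eq: "\<Phi> z1 = \<Phi> z2"
    have e1: "z1 \<in> extensional {..<N}" "z2 \<in> extensional {..<N}"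
      using z1 z2 unfolding assignments_def by (auto simp: PiE_def)
    show "z1 = z2"
    proof (rule extensionalityI[OF e1])
      fix j assume j: "j \<in> {..<N}"
      have "\<Phi> z1 (\<sigma> j) = \<Phi> z2 (\<sigma> j)" using eq by simp
      then show "z1 j = z2 j" unfolding \<Phi>_def using j c1[of j] \<sigma>lt[of j] by auto
    qed
  qed
  moreover have "finite {z \<in> ?A. restrict (unitz N z) V = k'}" using finite_assign by auto
  ultimately show ?thesis by (meson card_inj_on_le)
qed

lemma fiber_eq:
  assumes "V \<subseteq> QU Q Nq" "k \<in> InjS N V" "k' \<in> InjS N V"
  shows "card {z \<in> assignments N Q Nq. restrict (unitz N z) V = k}
       = card {z \<in> assignments N Q Nq. restrict (unitz N z) V = k'}"
  using fiber_le[OF assms] fiber_le[OF assms(1,3,2)] by simp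

lemma expect_restrict:
  assumes V: "V \<subseteq> QU Q Nq" and ne: "assignments N Q Nq \<noteq> {}"
  shows "expect_cr N Q Nq (\<lambda>z. G (restrict (unitz N z) V)) = (\<Sum>k\<in>InjS N V. G k) / card (InjS N V)"
proof -
  let ?A = "assignments N Q Nq"
  let ?r = "\<lambda>z. restrict (unitz N z) V"
  let ?I = "InjS N V"
  have fV: "finite V" using V finite_QU finite_subset by blast
  have fA: "finite ?A" by (rule finite_assign)
  have fI: "finite ?I" using fV by (rule finite_InjS)
  have im: "?r ` ?A \<subseteq> ?I" using rz_Inj[OF _ V] by blast
  obtain z0 where z0: "z0 \<in> ?A" using ne by blast
  define m where "m = card {z \<in> ?A. ?r z = ?r z0}"
  have k0: "?r z0 \<in> ?I" using im z0 by blast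
  have mk: "card {z \<in> ?A. ?r z = k} = m" if "k \<in> ?I" for k
    unfolding m_def by (rule fiber_eq[OF V that k0])
  have "m > 0" unfolding m_def using fA z0 by (subst card_gt_0_iff) auto
  have s1: "(\<Sum>z\<in>?A. G (?r z)) = (\<Sum>k\<in>?I. \<Sum>z\<in>{z\<in>?A. ?r z = k}. G (?r z))"
    by (rule sum.group[OF fA fI im, symmetric])
  also have "\<dots> = (\<Sum>k\<in>?I. real m * G k)"
    by (rule sum.cong[OF refl]) (simp add: mk)
  finally have s1': "(\<Sum>z\<in>?A. G (?r z)) = real m * (\<Sum>k\<in>?I. G k)" by (simp add: sum_distrib_left)
  have "(\<Sum>z\<in>?A. (1::nat)) = (\<Sum>k\<in>?I. \<Sum>z\<in>{z\<in>?A. ?r z = k}. (1::nat))"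
    by (rule sum.group[OF fA fI im, symmetric])
  also have "\<dots> = (\<Sum>k\<in>?I. m)" by (rule sum.cong[OF refl]) (simp add: mk)
  finally have "card ?A = card ?I * m" by simp
  then show ?thesis unfolding expect_cr_def s1' using \<open>m > 0\<close> by simp
qed


lemma card_InjS: "finite V \<Longrightarrow> card (InjS N V) = prod (\<lambda>j. N - j) {0..<card V}"
  unfolding InjS_def using card_inj_on_subset_funcset[of V "{..<N}" V] by simp

lemma InjS_lower:
  assumes "finite V" "card V \<le> 4" "8 \<le> N"
  shows "real N ^ card V / 16 \<le> real (card (InjS N V))"
proof -
  have "(\<Prod>j\<in>{0..<card V}. real N / 2) \<le> (\<Prod>j\<in>{0..<card V}. real (N - j))"
  proof (rule prod_mono)
    fix j assume "j \<in> {0..<card V}"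
    then have "j < 4" using assms by auto
    then have "real (N - j) = real N - real j" using assms by (simp add: of_nat_diff)
    then show "0 \<le> real N / 2 \<and> real N / 2 \<le> real (N - j)" using \<open>j < 4\<close> assms by auto
  qed
  moreover have "(\<Prod>j\<in>{0..<card V}. real N / 2) = real N ^ card V / 2 ^ card V"
    by (simp add: power_divide)
  moreover have "real N ^ card V / 16 \<le> real N ^ card V / 2 ^ card V"
  proof -
    have "(2::real) ^ card V \<le> 2 ^ 4" using assms(2) by (intro power_increasing) auto
    then show ?thesis by (intro divide_left_mono) auto
  qed
  moreover have "real (card (InjS N V)) = (\<Prod>j\<in>{0..<card V}. real (N - j))"
    by (simp add: card_InjS[OF assms(1)])
  ultimately show ?thesis by linarith
qed

lemma InjS_upper:
  assumes "finite V"
  shows "card (InjS N V) \<le> N ^ card V"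
proof -
  have "InjS N V \<subseteq> V \<rightarrow>\<^sub>E {..<N}" unfolding InjS_def by auto
  then have "card (InjS N V) \<le> card (V \<rightarrow>\<^sub>E {..<N})"
    by (intro card_mono) (auto simp: finite_PiE assms)
  then show ?thesis by (simp add: card_funcsetE[OF assms])
qed

lemma count_le:
  assumes "finite T" "x \<in> T"
  shows "card {b \<in> InjS N T. b x = v} \<le> N ^ (card T - 1)"
proof -
  let ?P = "PiE T (\<lambda>i. if i = x then {v} else {..<N})"
  have sub: "{b \<in> InjS N T. b x = v} \<subseteq> ?P"
    unfolding InjS_def by (auto simp: PiE_def Pi_def)
  have fin: "finite ?P" using assms(1) by (intro finite_PiE) auto
  have c1: "card ?P = (\<Prod>i\<in>T. card (if i = x then {v} else {..<N}))"
    by (rule card_PiE[OF assms(1)])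
  have c2: "(\<Prod>i\<in>T. card (if i = x then {v} else {..<N})) = (\<Prod>i\<in>T. if i = x then 1 else N)"
    by (rule prod.cong) auto
  have c3: "(\<Prod>i\<in>T. if i = x then 1 else N) = (if x = x then 1 else N) * (\<Prod>i\<in>T - {x}. if i = x then 1 else N)"
    by (rule prod.remove[OF assms])
  have c4: "(\<Prod>i\<in>T - {x}. if i = x then 1 else N) = (\<Prod>i\<in>T - {x}. N)"
    by (rule prod.cong) auto
  have c5: "(\<Prod>i\<in>T - {x}. N) = N ^ (card T - 1)" using assms by simp
  have "card ?P = N ^ (card T - 1)" using c1 c2 c3 c4 c5 by simp
  then show ?thesis using card_mono[OF fin sub] by simp
qed

lemma count_sum_bound:
  fixes F :: "(nat \<Rightarrow> nat) \<Rightarrow> real"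
  assumes fS: "finite S" and fT: "finite T" and F0: "\<And>a. F a \<ge> 0"
  shows "(\<Sum>a\<in>InjS N S. \<Sum>b\<in>InjS N T. F a * (\<Sum>y\<in>S. \<Sum>x\<in>T. if a y = b x then 1 else 0))
     \<le> real (card S * card T) * real N ^ (card T - 1) * (\<Sum>a\<in>InjS N S. F a)"
proof -
  have fI: "finite (InjS N T)" by (rule finite_InjS[OF fT])
  have inner: "(\<Sum>b\<in>InjS N T. F a * (\<Sum>y\<in>S. \<Sum>x\<in>T. if a y = b x then 1 else 0))
      \<le> F a * (real (card S * card T) * real N ^ (card T - 1))" for a
  proof -
    have "(\<Sum>b\<in>InjS N T. F a * (\<Sum>y\<in>S. \<Sum>x\<in>T. if a y = b x then 1 else 0))
        = F a * (\<Sum>y\<in>S. \<Sum>x\<in>T. \<Sum>b\<in>InjS N T. if a y = b x then 1 else (0::real))"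
      by (simp add: sum_distrib_left sum.swap[of _ "InjS N T"])
    also have "(\<Sum>y\<in>S. \<Sum>x\<in>T. \<Sum>b\<in>InjS N T. if a y = b x then 1 else (0::real))
        = (\<Sum>y\<in>S. \<Sum>x\<in>T. real (card {b \<in> InjS N T. b x = a y}))"
    proof (intro sum.cong refl)
      fix y x
      have "(\<Sum>b\<in>InjS N T. if a y = b x then 1 else (0::real)) = (\<Sum>b\<in>{b \<in> InjS N T. b x = a y}. 1)"
        using fI by (subst sum.inter_filter) (auto simp: eq_commute)
      then show "(\<Sum>b\<in>InjS N T. if a y = b x then 1 else (0::real)) = real (card {b \<in> InjS N T. b x = a y})"
        by simp
    qed
    also have "\<dots> \<le> (\<Sum>y\<in>S. \<Sum>x\<in>T. real N ^ (card T - 1))"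
    proof (intro sum_mono)
      fix y x assume "x \<in> T"
      then have "card {b \<in> InjS N T. b x = a y} \<le> N ^ (card T - 1)" by (rule count_le[OF fT])
      then show "real (card {b \<in> InjS N T. b x = a y}) \<le> real N ^ (card T - 1)"
        by (metis of_nat_le_iff of_nat_power)
    qed
    also have "\<dots> = real (card S * card T) * real N ^ (card T - 1)" by simp
    finally show ?thesis using F0[of a] by (simp add: mult_left_mono)
  qed
  have "(\<Sum>a\<in>InjS N S. \<Sum>b\<in>InjS N T. F a * (\<Sum>y\<in>S. \<Sum>x\<in>T. if a y = b x then 1 else 0))
      \<le> (\<Sum>a\<in>InjS N S. F a * (real (card S * card T) * real N ^ (card T - 1)))"
    by (rule sum_mono) (rule inner)
  also have "\<dots> = real (card S * card T) * real N ^ (card T - 1) * (\<Sum>a\<in>InjS N S. F a)"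
    by (simp add: sum_distrib_left sum_distrib_right mult.commute)
  finally show ?thesis .
qed




lemma arith_help:
  fixes A a cV cS n u w :: real
  assumes A: "0 \<le> A" and n: "0 < n" and w: "0 < w" and u: "0 < u" and a: "a \<le> 2 * u * A"
    and cV: "w * u * n / 16 \<le> cV" and cS: "0 < cS" "cS \<le> w"
  shows "a / cV \<le> 32 / n * (A / cS)"
proof -
  have cVp: "0 < w * u * n / 16" using n w u by simp
  have cVp': "0 < cV" using cVp cV by linarith
  have 1: "a / cV \<le> 2 * u * A / cV" by (rule divide_right_mono[OF a]) (use cVp' in simp)
  have 2: "2 * u * A / cV \<le> 2 * u * A / (w * u * n / 16)"
    by (rule divide_left_mono) (use A u cV cVp in auto)
  have 3: "2 * u * A / (w * u * n / 16) = 32 * A / (w * n)" using u by (simp add: field_simps)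
  have 4: "32 * A / (w * n) \<le> 32 * A / (cS * n)"
    by (rule divide_left_mono) (use A n cS in auto)
  have 5: "32 * A / (cS * n) = 32 / n * (A / cS)" by simp
  show ?thesis using 1 2 3 4 5 by linarith
qed

lemma cov_pure:
  fixes f h :: "(nat \<Rightarrow> nat) \<Rightarrow> real"
  assumes fS: "finite S" and fT: "finite T" and disj: "S \<inter> T = {}"
    and cS: "card S \<le> 2" and cT: "card T \<le> 2" and neS: "S \<noteq> {}" and neT: "T \<noteq> {}"
    and N8: "8 \<le> N"
    and fr: "\<And>k. f k = f (restrict k S)" and hr: "\<And>k. h k = h (restrict k T)"
    and f0: "(\<Sum>a\<in>InjS N S. f a) = 0" and h0: "(\<Sum>b\<in>InjS N T. h b) = 0"
  shows "\<bar>\<Sum>k\<in>InjS N (S \<union> T). f k * h k\<bar> / real (card (InjS N (S \<union> T)))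
       \<le> 32 / real N * ((\<Sum>a\<in>InjS N S. (f a)^2) / real (card (InjS N S))
                       + (\<Sum>b\<in>InjS N T. (h b)^2) / real (card (InjS N T)))"
proof -
  define IS where "IS = InjS N S"
  define IT where "IT = InjS N T"
  define IV where "IV = InjS N (S \<union> T)"
  define P where "P = IS \<times> IT"
  define D where "D = {p \<in> P. fst p ` S \<inter> snd p ` T = {}}"
  define g :: "((nat \<Rightarrow> nat) \<times> (nat \<Rightarrow> nat)) \<Rightarrow> real" where "g = (\<lambda>(a, b). f a * h b)"
  have fI: "finite IS" "finite IT" "finite IV" unfolding IS_def IT_def IV_def using fS fT
    by (auto intro: finite_InjS)
  have fP: "finite P" unfolding P_def using fI by auto
  define \<phi> :: "(nat \<Rightarrow> nat) \<Rightarrow> (nat \<Rightarrow> nat) \<times> (nat \<Rightarrow> nat)" where "\<phi> = (\<lambda>k. (restrict k S, restrict k T))"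
  have inj: "inj_on \<phi> IV"
  proof (rule inj_onI)
    fix k1 k2 assume k: "k1 \<in> IV" "k2 \<in> IV" "\<phi> k1 = \<phi> k2"
    have e: "k1 \<in> extensional (S \<union> T)" "k2 \<in> extensional (S \<union> T)"
      using k(1,2) unfolding IV_def InjS_def by (auto simp: PiE_def)
    have r: "restrict k1 S = restrict k2 S" "restrict k1 T = restrict k2 T" using k(3) unfolding \<phi>_def by auto
    show "k1 = k2"
    proof (rule extensionalityI[OF e])
      fix x assume x: "x \<in> S \<union> T"
      show "k1 x = k2 x"
      proof (cases "x \<in> S")
        case True then show ?thesis using fun_cong[OF r(1), of x] by simp
      next
        case False then have "x \<in> T" using x by simp
        then show ?thesis using fun_cong[OF r(2), of x] by simp
      qed
    qed
  qed
  have img: "\<phi> ` IV = D"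
  proof (intro set_eqI iffI)
    fix p assume "p \<in> \<phi> ` IV"
    then obtain k where k: "k \<in> IV" and p: "p = \<phi> k" by blast
    have kP: "k \<in> (S \<union> T) \<rightarrow>\<^sub>E {..<N}" and ki: "inj_on k (S \<union> T)" using k unfolding IV_def InjS_def by auto
    have "restrict k S \<in> IS"
    proof -
      have "restrict k S \<in> S \<rightarrow>\<^sub>E {..<N}" using kP by (auto simp: PiE_def Pi_def)
      moreover have "inj_on (restrict k S) S"
        using inj_on_subset[OF ki, of S] by (simp add: inj_on_def)
      ultimately show ?thesis unfolding IS_def InjS_def by simp
    qed
    moreover have "restrict k T \<in> IT"
    proof -
      have "restrict k T \<in> T \<rightarrow>\<^sub>E {..<N}" using kP by (auto simp: PiE_def Pi_def)
      moreover have "inj_on (restrict k T) T"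
        using inj_on_subset[OF ki, of T] by (simp add: inj_on_def)
      ultimately show ?thesis unfolding IT_def InjS_def by simp
    qed
    moreover have "restrict k S ` S \<inter> restrict k T ` T = {}"
    proof (rule ccontr)
      assume "restrict k S ` S \<inter> restrict k T ` T \<noteq> {}"
      then obtain y x where yx: "y \<in> S" "x \<in> T" "k y = k x" by auto
      then have "y = x" using ki by (auto simp: inj_on_def)
      then show False using yx disj by auto
    qed
    ultimately show "p \<in> D" unfolding D_def P_def p \<phi>_def by simp
  next
    fix p assume pD: "p \<in> D"
    obtain a b where pab: "p = (a, b)" by (cases p)
    have aI: "a \<in> S \<rightarrow>\<^sub>E {..<N}" "inj_on a S" and bI: "b \<in> T \<rightarrow>\<^sub>E {..<N}" "inj_on b T"
      and dj: "a ` S \<inter> b ` T = {}"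
      using pD unfolding D_def P_def IS_def IT_def InjS_def pab by auto
    define k where "k = restrict (\<lambda>x. if x \<in> S then a x else b x) (S \<union> T)"
    have rS: "restrict k S = a"
    proof (rule ext)
      fix x show "restrict k S x = a x"
        using aI(1) by (cases "x \<in> S") (auto simp: k_def PiE_def extensional_def)
    qed
    have rT: "restrict k T = b"
    proof (rule ext)
      fix x show "restrict k T x = b x"
        using bI(1) disj by (cases "x \<in> T") (auto simp: k_def PiE_def extensional_def)
    qed
    have kV: "k \<in> IV"
    proof -
      have "k \<in> (S \<union> T) \<rightarrow>\<^sub>E {..<N}" using aI(1) bI(1) by (auto simp: k_def PiE_def Pi_def)
      moreover have "inj_on k (S \<union> T)"
      proof (rule inj_onI)
        fix x y assume x: "x \<in> S \<union> T" and y: "y \<in> S \<union> T" and e: "k x = k y"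
        show "x = y"
        proof (cases "x \<in> S"; cases "y \<in> S")
          assume "x \<in> S" "y \<in> S"
          then have "a x = a y" using e x y by (simp add: k_def)
          then show ?thesis using inj_onD[OF aI(2)] \<open>x \<in> S\<close> \<open>y \<in> S\<close> by blast
        next
          assume "x \<in> S" "y \<notin> S" then have "y \<in> T" using y by simp
          have "a x = b y" using e x y \<open>x \<in> S\<close> \<open>y \<notin> S\<close> by (simp add: k_def)
          then have "a x \<in> a ` S \<inter> b ` T" using \<open>x \<in> S\<close> \<open>y \<in> T\<close> by blast
          then show ?thesis using dj by simp
        next
          assume "x \<notin> S" "y \<in> S" then have "x \<in> T" using x by simp
          have "b x = a y" using e x y \<open>x \<notin> S\<close> \<open>y \<in> S\<close> by (simp add: k_def)
          then have "a y \<in> a ` S \<inter> b ` T" using \<open>y \<in> S\<close> \<open>x \<in> T\<close> by (metis IntI imageI)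
          then show ?thesis using dj by simp
        next
          assume "x \<notin> S" "y \<notin> S" then have "x \<in> T" "y \<in> T" using x y by auto
          have "b x = b y" using e x y \<open>x \<notin> S\<close> \<open>y \<notin> S\<close> by (simp add: k_def)
          then show ?thesis using inj_onD[OF bI(2)] \<open>x \<in> T\<close> \<open>y \<in> T\<close> by blast
        qed
      qed
      ultimately show ?thesis unfolding IV_def InjS_def by simp
    qed
    have "\<phi> k = p" unfolding pab \<phi>_def using rS rT by simp
    then show "p \<in> \<phi> ` IV" using kV by blast
  qed
  have sumV: "(\<Sum>k\<in>IV. f k * h k) = (\<Sum>p\<in>D. g p)"
  proof -
    have "(\<Sum>p\<in>D. g p) = (\<Sum>k\<in>IV. g (\<phi> k))" unfolding img[symmetric] by (simp add: sum.reindex[OF inj])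
    also have "\<dots> = (\<Sum>k\<in>IV. f k * h k)"
      by (rule sum.cong[OF refl]) (simp add: g_def \<phi>_def fr[symmetric] hr[symmetric])
    finally show ?thesis by simp
  qed
  have sumP: "(\<Sum>p\<in>P. g p) = 0"
  proof -
    have "(\<Sum>p\<in>P. g p) = (\<Sum>a\<in>IS. \<Sum>b\<in>IT. f a * h b)"
      unfolding P_def g_def by (rule sum.cartesian_product[symmetric])
    also have "\<dots> = (\<Sum>a\<in>IS. f a) * (\<Sum>b\<in>IT. h b)" by (simp add: sum_product)
    finally show ?thesis using f0 unfolding IS_def by simp
  qed
  have DP: "D \<subseteq> P" unfolding D_def by auto
  have "(\<Sum>p\<in>P. g p) = (\<Sum>p\<in>P - D. g p) + (\<Sum>p\<in>D. g p)" by (rule sum.subset_diff[OF DP fP])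
  then have sD: "(\<Sum>p\<in>D. g p) = - (\<Sum>p\<in>P - D. g p)" using sumP by linarith
  define cnt where "cnt = (\<lambda>p::(nat \<Rightarrow> nat) \<times> (nat \<Rightarrow> nat). (\<Sum>y\<in>S. \<Sum>x\<in>T. if fst p y = snd p x then 1 else 0::real))"
  define G2 where "G2 = (\<lambda>p::(nat \<Rightarrow> nat) \<times> (nat \<Rightarrow> nat). ((f (fst p))^2 + (h (snd p))^2) / 2)"
  have G20: "G2 p \<ge> 0" for p unfolding G2_def by simp
  have cnt0: "cnt p \<ge> 0" for p unfolding cnt_def by (intro sum_nonneg) auto
  have cnt1: "cnt p \<ge> 1" if "p \<in> P - D" for p
  proof -
    from that obtain y x where yx: "y \<in> S" "x \<in> T" "fst p y = snd p x" unfolding D_def by auto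
    have "(1::real) \<le> (\<Sum>x'\<in>T. if fst p y = snd p x' then 1 else 0)"
      using member_le_sum[of x T "\<lambda>x'. if fst p y = snd p x' then 1 else (0::real)"] yx fT by auto
    also have "\<dots> \<le> cnt p" unfolding cnt_def
    proof (rule member_le_sum)
      show "y \<in> S" "finite S" using yx fS by auto
      show "\<And>y'. y' \<in> S - {y} \<Longrightarrow> 0 \<le> (\<Sum>x'\<in>T. if fst p y' = snd p x' then 1 else (0::real))"
        by (intro sum_nonneg) auto
    qed
    finally show ?thesis .
  qed
  have "\<bar>\<Sum>p\<in>D. g p\<bar> = \<bar>\<Sum>p\<in>P - D. g p\<bar>" using sD by simp
  also have "\<dots> \<le> (\<Sum>p\<in>P - D. \<bar>g p\<bar>)" by (rule sum_abs)
  also have "\<dots> \<le> (\<Sum>p\<in>P - D. G2 p)"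
  proof (rule sum_mono)
    fix p
    have "\<bar>f (fst p) * h (snd p)\<bar> \<le> ((f (fst p))^2 + (h (snd p))^2) / 2"
      using sum_squares_bound[of "\<bar>f (fst p)\<bar>" "\<bar>h (snd p)\<bar>"]
      by (simp add: abs_mult power2_abs)
    then show "\<bar>g p\<bar> \<le> G2 p" unfolding g_def G2_def by (simp add: case_prod_beta)
  qed
  also have "\<dots> \<le> (\<Sum>p\<in>P - D. G2 p * cnt p)"
  proof (rule sum_mono)
    fix p assume "p \<in> P - D"
    then have "1 \<le> cnt p" by (rule cnt1)
    then show "G2 p \<le> G2 p * cnt p" using G20[of p] mult_left_mono[of 1 "cnt p" "G2 p"] by simp
  qed
  also have "\<dots> \<le> (\<Sum>p\<in>P. G2 p * cnt p)"
    by (rule sum_mono2[OF fP]) (use G20 cnt0 in auto)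
  also have "\<dots> = ((\<Sum>p\<in>P. (f (fst p))^2 * cnt p) + (\<Sum>p\<in>P. (h (snd p))^2 * cnt p)) / 2"
    unfolding G2_def by (simp add: sum.distrib sum_divide_distrib[symmetric] algebra_simps)
  finally have main: "\<bar>\<Sum>p\<in>D. g p\<bar> \<le> ((\<Sum>p\<in>P. (f (fst p))^2 * cnt p) + (\<Sum>p\<in>P. (h (snd p))^2 * cnt p)) / 2" .
  have b1: "(\<Sum>p\<in>P. (f (fst p))^2 * cnt p) \<le> real (card S * card T) * real N ^ (card T - 1) * (\<Sum>a\<in>IS. (f a)^2)"
  proof -
    have "(\<Sum>p\<in>P. (f (fst p))^2 * cnt p) = (\<Sum>a\<in>IS. \<Sum>b\<in>IT. (f a)^2 * (\<Sum>y\<in>S. \<Sum>x\<in>T. if a y = b x then 1 else 0))"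
      unfolding P_def cnt_def by (subst sum.cartesian_product) (simp add: case_prod_beta)
    also have "\<dots> \<le> real (card S * card T) * real N ^ (card T - 1) * (\<Sum>a\<in>IS. (f a)^2)"
      unfolding IS_def IT_def by (rule count_sum_bound[OF fS fT]) simp
    finally show ?thesis .
  qed
  have b2: "(\<Sum>p\<in>P. (h (snd p))^2 * cnt p) \<le> real (card T * card S) * real N ^ (card S - 1) * (\<Sum>b\<in>IT. (h b)^2)"
  proof -
    have "(\<Sum>p\<in>P. (h (snd p))^2 * cnt p) = (\<Sum>a\<in>IS. \<Sum>b\<in>IT. (h b)^2 * (\<Sum>y\<in>S. \<Sum>x\<in>T. if a y = b x then 1 else 0))"
      unfolding P_def cnt_def by (subst sum.cartesian_product) (simp add: case_prod_beta)
    also have "\<dots> = (\<Sum>b\<in>IT. \<Sum>a\<in>IS. (h b)^2 * (\<Sum>x\<in>T. \<Sum>y\<in>S. if b x = a y then 1 else 0))"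
      by (subst sum.swap) (simp add: sum.swap[of _ T] eq_commute)
    also have "\<dots> \<le> real (card T * card S) * real N ^ (card S - 1) * (\<Sum>b\<in>IT. (h b)^2)"
      unfolding IS_def IT_def by (rule count_sum_bound[OF fT fS]) simp
    finally show ?thesis .
  qed
  define A1 where "A1 = (\<Sum>a\<in>IS. (f a)^2)"
  define A2 where "A2 = (\<Sum>b\<in>IT. (h b)^2)"
  have A0: "0 \<le> A1" "0 \<le> A2" unfolding A1_def A2_def by (auto intro: sum_nonneg)
  have sge1: "card S \<ge> 1" "card T \<ge> 1" using neS neT fS fT by (auto simp: Suc_le_eq card_gt_0_iff)
  have cardV: "card (S \<union> T) = card S + card T" using card_Un_disjoint[OF fS fT disj] .
  have Npos: "0 < real N" using N8 by simp
  have cV: "real N ^ (card S + card T) / 16 \<le> real (card IV)"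
    unfolding IV_def using InjS_lower[of "S \<union> T" N] fS fT cS cT N8 cardV by simp
  have cSu: "real (card IS) \<le> real N ^ card S" "real (card IT) \<le> real N ^ card T"
    unfolding IS_def IT_def using InjS_upper[OF fS, of N] InjS_upper[OF fT, of N]
    by (metis of_nat_le_iff of_nat_power)+
  have cSp: "0 < real (card IS)" "0 < real (card IT)"
  proof -
    have "0 < card IS" unfolding IS_def card_InjS[OF fS] using cS N8 by (intro prod_pos) auto
    moreover have "0 < card IT" unfolding IT_def card_InjS[OF fT] using cT N8 by (intro prod_pos) auto
    ultimately show "0 < real (card IS)" "0 < real (card IT)" by auto
  qed
  have e1: "real N ^ (card S + card T) = real N ^ card S * real N ^ (card T - 1) * real N"
    using sge1 by (simp add: power_add[symmetric] power_Suc2[symmetric])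
  have e2: "real N ^ (card S + card T) = real N ^ card T * real N ^ (card S - 1) * real N"
    using sge1 by (simp add: power_add[symmetric] power_Suc2[symmetric] add.commute)
  have st: "real (card S * card T) \<le> 4" using cS cT
  proof -
    have "card S * card T \<le> 2 * 2" using cS cT by (intro mult_le_mono) auto
    then have "real (card S * card T) \<le> real (4::nat)" by (simp only: of_nat_le_iff)
    then show ?thesis by simp
  qed
  have ts: "real (card T * card S) \<le> 4" using st by (simp add: mult.commute)
  define a1 where "a1 = real (card S * card T) * real N ^ (card T - 1) * A1 / 2"
  define a2 where "a2 = real (card T * card S) * real N ^ (card S - 1) * A2 / 2"
  have a1b: "a1 \<le> 2 * real N ^ (card T - 1) * A1"
  proof -
    have "real (card S * card T) * (real N ^ (card T - 1) * A1) \<le> 4 * (real N ^ (card T - 1) * A1)"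
      by (rule mult_right_mono[OF st]) (use A0 in simp)
    then show ?thesis unfolding a1_def by simp
  qed
  have a2b: "a2 \<le> 2 * real N ^ (card S - 1) * A2"
  proof -
    have "real (card T * card S) * (real N ^ (card S - 1) * A2) \<le> 4 * (real N ^ (card S - 1) * A2)"
      by (rule mult_right_mono[OF ts]) (use A0 in simp)
    then show ?thesis unfolding a2_def by simp
  qed
  have q1: "a1 / real (card IV) \<le> 32 / real N * (A1 / real (card IS))"
    by (rule arith_help[OF A0(1) Npos _ _ a1b]) (use cV e1 cSp cSu Npos in auto)
  have q2: "a2 / real (card IV) \<le> 32 / real N * (A2 / real (card IT))"
    by (rule arith_help[OF A0(2) Npos _ _ a2b]) (use cV e2 cSp cSu Npos in auto)
  have X: "\<bar>\<Sum>k\<in>IV. f k * h k\<bar> \<le> a1 + a2"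
    using main b1 b2 unfolding sumV a1_def a2_def A1_def A2_def by (simp add: add_divide_distrib)
  have cVp: "0 < real (card IV)" using cV Npos by (smt (verit) zero_less_power divide_pos_pos)
  have "\<bar>\<Sum>k\<in>IV. f k * h k\<bar> / real (card IV) \<le> (a1 + a2) / real (card IV)"
    by (rule divide_right_mono[OF X]) (use cVp in simp)
  also have "\<dots> = a1 / real (card IV) + a2 / real (card IV)" by (simp add: add_divide_distrib)
  also have "\<dots> \<le> 32 / real N * (A1 / real (card IS)) + 32 / real N * (A2 / real (card IT))"
    using q1 q2 by linarith
  finally show ?thesis unfolding IV_def IS_def IT_def A1_def A2_def by (simp add: distrib_left)
qed




lemma E_add: "expect_cr N Q Nq (\<lambda>z. f z + g z) = expect_cr N Q Nq f + expect_cr N Q Nq g"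
  unfolding expect_cr_def by (simp add: sum.distrib add_divide_distrib)

lemma E_diff: "expect_cr N Q Nq (\<lambda>z. f z - g z) = expect_cr N Q Nq f - expect_cr N Q Nq g"
  unfolding expect_cr_def by (simp add: sum_subtractf diff_divide_distrib)

lemma E_cmult: "expect_cr N Q Nq (\<lambda>z. c * f z) = c * expect_cr N Q Nq f"
  unfolding expect_cr_def by (simp add: sum_distrib_left)

lemma E_const: "assignments N Q Nq \<noteq> {} \<Longrightarrow> expect_cr N Q Nq (\<lambda>z. c) = c"
  unfolding expect_cr_def using finite_assign[of N Q Nq] by simp

lemma E_sum: "finite I \<Longrightarrow> expect_cr N Q Nq (\<lambda>z. \<Sum>i\<in>I. f i z) = (\<Sum>i\<in>I. expect_cr N Q Nq (f i))"
  unfolding expect_cr_def by (simp add: sum.swap[of _ I] sum_divide_distrib)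

lemma E_mono: "(\<And>z. z \<in> assignments N Q Nq \<Longrightarrow> f z \<le> g z) \<Longrightarrow> expect_cr N Q Nq f \<le> expect_cr N Q Nq g"
  unfolding expect_cr_def by (intro divide_right_mono sum_mono) auto

lemma E_cong: "(\<And>z. z \<in> assignments N Q Nq \<Longrightarrow> f z = g z) \<Longrightarrow> expect_cr N Q Nq f = expect_cr N Q Nq g"
  unfolding expect_cr_def by (simp cong: sum.cong)

lemma E_abs: "\<bar>expect_cr N Q Nq f\<bar> \<le> expect_cr N Q Nq (\<lambda>z. \<bar>f z\<bar>)"
  unfolding expect_cr_def by (simp add: divide_right_mono sum_abs)

lemma E_div: "expect_cr N Q Nq (\<lambda>z. f z / c) = expect_cr N Q Nq f / c"
  unfolding expect_cr_def by (simp add: sum_divide_distrib mult.commute)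

lemma E_var_le:
  assumes ne: "assignments N Q Nq \<noteq> {}"
  shows "expect_cr N Q Nq (\<lambda>z. (f z - expect_cr N Q Nq f)^2) \<le> expect_cr N Q Nq (\<lambda>z. (f z - c)^2)"
proof -
  let ?E = "expect_cr N Q Nq"
  define m where "m = ?E f"
  have "?E (\<lambda>z. (f z - c)^2) = ?E (\<lambda>z. (f z - m)^2 + (2 * (m - c)) * f z + (c^2 - m^2))"
    by (rule E_cong) (simp add: power2_eq_square algebra_simps)
  also have "\<dots> = ?E (\<lambda>z. (f z - m)^2) + 2 * (m - c) * m + (c^2 - m^2)"
    by (simp add: E_add E_cmult E_const[OF ne] m_def)
  also have "\<dots> = ?E (\<lambda>z. (f z - m)^2) + (m - c)^2" by (simp add: power2_eq_square algebra_simps)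
  finally show ?thesis unfolding m_def by simp
qed

lemma E_cov_cs:
  "\<bar>expect_cr N Q Nq (\<lambda>z. (f z - a) * (g z - b))\<bar>
     \<le> (expect_cr N Q Nq (\<lambda>z. (f z - a)^2) + expect_cr N Q Nq (\<lambda>z. (g z - b)^2)) / 2"
proof -
  let ?E = "expect_cr N Q Nq"
  have "\<bar>?E (\<lambda>z. (f z - a) * (g z - b))\<bar> \<le> ?E (\<lambda>z. \<bar>(f z - a) * (g z - b)\<bar>)" by (rule E_abs)
  also have "\<dots> \<le> ?E (\<lambda>z. ((f z - a)^2 + (g z - b)^2) / 2)"
  proof (rule E_mono)
    fix z
    show "\<bar>(f z - a) * (g z - b)\<bar> \<le> ((f z - a)^2 + (g z - b)^2) / 2"
      using sum_squares_bound[of "\<bar>f z - a\<bar>" "\<bar>g z - b\<bar>"] by (simp add: abs_mult power2_abs)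
  qed
  also have "\<dots> = (?E (\<lambda>z. (f z - a)^2) + ?E (\<lambda>z. (g z - b)^2)) / 2"
    by (simp add: add_divide_distrib E_add E_div)
  finally show ?thesis .
qed

lemma chebyshev_cr:
  assumes t: "t > 0"
  shows "prob_cr N Q Nq (\<lambda>z. t \<le> \<bar>X z - expect_cr N Q Nq X\<bar>)
     \<le> expect_cr N Q Nq (\<lambda>z. (X z - expect_cr N Q Nq X)^2) / t^2"
proof -
  let ?A = "assignments N Q Nq"
  define m where "m = expect_cr N Q Nq X"
  let ?B = "{z \<in> ?A. t \<le> \<bar>X z - m\<bar>}"
  have fA: "finite ?A" by (rule finite_assign)
  have "real (card ?B) * t^2 = (\<Sum>z\<in>?B. t^2)" by simp
  also have "\<dots> \<le> (\<Sum>z\<in>?B. (X z - m)^2)"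
  proof (rule sum_mono)
    fix z assume "z \<in> ?B"
    then have "t \<le> \<bar>X z - m\<bar>" by simp
    then have "t^2 \<le> \<bar>X z - m\<bar>^2" using t by (intro power_mono) auto
    then show "t^2 \<le> (X z - m)^2" by simp
  qed
  also have "\<dots> \<le> (\<Sum>z\<in>?A. (X z - m)^2)" by (rule sum_mono2[OF fA]) auto
  finally have c: "real (card ?B) * t^2 \<le> (\<Sum>z\<in>?A. (X z - m)^2)" .
  have "real (card ?B) / real (card ?A) \<le> (\<Sum>z\<in>?A. (X z - m)^2) / real (card ?A) / t^2"
  proof (cases "card ?A = 0")
    case True then show ?thesis by simp
  next
    case False
    then have "0 < real (card ?A)" by simp
    with c t show ?thesis by (simp add: field_simps)
  qed
  then show ?thesis unfolding prob_cr_def expect_cr_def m_def by simp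
qed

lemma restrict_restrict_sub: "S \<subseteq> V \<Longrightarrow> restrict (restrict g V) S = restrict g S"
  unfolding restrict_def by (rule ext) auto

lemma cov_z:
  fixes f h :: "(nat \<Rightarrow> nat) \<Rightarrow> real"
  assumes ne: "assignments N Q Nq \<noteq> {}"
    and SU: "S \<subseteq> QU Q Nq" and TU: "T \<subseteq> QU Q Nq" and disj: "S \<inter> T = {}"
    and cS: "card S \<le> 2" and cT: "card T \<le> 2" and neS: "S \<noteq> {}" and neT: "T \<noteq> {}"
    and N1: "1 \<le> N"
    and fr: "\<And>k. f k = f (restrict k S)" and hr: "\<And>k. h k = h (restrict k T)"
  defines "F \<equiv> (\<lambda>z. f (restrict (unitz N z) S))" and "H \<equiv> (\<lambda>z. h (restrict (unitz N z) T))"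
  shows "\<bar>expect_cr N Q Nq (\<lambda>z. (F z - expect_cr N Q Nq F) * (H z - expect_cr N Q Nq H))\<bar>
     \<le> 32 / real N * (expect_cr N Q Nq (\<lambda>z. (F z - expect_cr N Q Nq F)^2) + expect_cr N Q Nq (\<lambda>z. (H z - expect_cr N Q Nq H)^2))"
proof (cases "8 \<le> N")
  case False
  let ?E = "expect_cr N Q Nq"
  have v0: "0 \<le> ?E (\<lambda>z. (F z - ?E F)^2)" "0 \<le> ?E (\<lambda>z. (H z - ?E H)^2)"
    unfolding expect_cr_def by (auto intro!: sum_nonneg divide_nonneg_nonneg)
  have "1/2 \<le> 32 / real N" using False N1 by (simp add: field_simps)
  then have "(?E (\<lambda>z. (F z - ?E F)^2) + ?E (\<lambda>z. (H z - ?E H)^2)) / 2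
      \<le> 32 / real N * (?E (\<lambda>z. (F z - ?E F)^2) + ?E (\<lambda>z. (H z - ?E H)^2))"
    using mult_right_mono[OF \<open>1/2 \<le> 32 / real N\<close> add_nonneg_nonneg[OF v0]] by simp
  then show ?thesis using E_cov_cs[of N Q Nq F "?E F" H "?E H"] by linarith
next
  case True
  let ?E = "expect_cr N Q Nq"
  define a where "a = ?E F"
  define b where "b = ?E H"
  define f' where "f' = (\<lambda>k. f k - a)"
  define h' where "h' = (\<lambda>k. h k - b)"
  have fr': "\<And>k. f' k = f' (restrict k S)" unfolding f'_def using fr by simp
  have hr': "\<And>k. h' k = h' (restrict k T)" unfolding h'_def using hr by simp
  have fS: "finite S" "finite T" using SU TU finite_QU finite_subset by blast+
  have VU: "S \<union> T \<subseteq> QU Q Nq" using SU TU by simp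
  have eV: "?E (\<lambda>z. (F z - a) * (H z - b)) = (\<Sum>k\<in>InjS N (S \<union> T). f' k * h' k) / card (InjS N (S \<union> T))"
  proof -
    have "?E (\<lambda>z. (F z - a) * (H z - b)) = ?E (\<lambda>z. (\<lambda>k. f' k * h' k) (restrict (unitz N z) (S \<union> T)))"
    proof (rule E_cong)
      fix z
      have "f' (restrict (unitz N z) (S \<union> T)) = f' (restrict (unitz N z) S)"
        using fr'[of "restrict (unitz N z) (S \<union> T)"] restrict_restrict_sub[of S "S \<union> T"] by simp
      moreover have "h' (restrict (unitz N z) (S \<union> T)) = h' (restrict (unitz N z) T)"
        using hr'[of "restrict (unitz N z) (S \<union> T)"] restrict_restrict_sub[of T "S \<union> T"] by simp
      ultimately show "(F z - a) * (H z - b) = (\<lambda>k. f' k * h' k) (restrict (unitz N z) (S \<union> T))"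
        unfolding F_def H_def f'_def h'_def by simp
    qed
    also have "\<dots> = (\<Sum>k\<in>InjS N (S \<union> T). f' k * h' k) / card (InjS N (S \<union> T))"
      by (rule expect_restrict[OF VU ne])
    finally show ?thesis .
  qed
  obtain z0 where z0: "z0 \<in> assignments N Q Nq" using ne by blast
  have cpos: "0 < card (InjS N S)" "0 < card (InjS N T)"
    using rz_Inj[OF z0 SU] rz_Inj[OF z0 TU] finite_InjS[OF fS(1), of N] finite_InjS[OF fS(2), of N]
    by (auto simp: card_gt_0_iff)
  have eS: "?E (\<lambda>z. G (restrict (unitz N z) S)) = (\<Sum>k\<in>InjS N S. G k) / card (InjS N S)" for G
    by (rule expect_restrict[OF SU ne])
  have eT: "?E (\<lambda>z. G (restrict (unitz N z) T)) = (\<Sum>k\<in>InjS N T. G k) / card (InjS N T)" for G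
    by (rule expect_restrict[OF TU ne])
  have s0: "(\<Sum>k\<in>InjS N S. f' k) = 0"
  proof -
    have "?E (\<lambda>z. f' (restrict (unitz N z) S)) = ?E F - a" unfolding f'_def F_def
      by (simp add: E_diff E_const[OF ne])
    then have "(\<Sum>k\<in>InjS N S. f' k) / card (InjS N S) = 0" unfolding eS a_def by simp
    then show ?thesis using cpos by simp
  qed
  have t0: "(\<Sum>k\<in>InjS N T. h' k) = 0"
  proof -
    have "?E (\<lambda>z. h' (restrict (unitz N z) T)) = ?E H - b" unfolding h'_def H_def
      by (simp add: E_diff E_const[OF ne])
    then have "(\<Sum>k\<in>InjS N T. h' k) / card (InjS N T) = 0" unfolding eT b_def by simp
    then show ?thesis using cpos by simp
  qed
  have vS: "?E (\<lambda>z. (F z - a)^2) = (\<Sum>k\<in>InjS N S. (f' k)^2) / card (InjS N S)"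
    using eS[of "\<lambda>k. (f' k)^2"] unfolding F_def f'_def by simp
  have vT: "?E (\<lambda>z. (H z - b)^2) = (\<Sum>k\<in>InjS N T. (h' k)^2) / card (InjS N T)"
    using eT[of "\<lambda>k. (h' k)^2"] unfolding H_def h'_def by simp
  have "\<bar>\<Sum>k\<in>InjS N (S \<union> T). f' k * h' k\<bar> / real (card (InjS N (S \<union> T)))
       \<le> 32 / real N * ((\<Sum>a\<in>InjS N S. (f' a)^2) / real (card (InjS N S))
                       + (\<Sum>b\<in>InjS N T. (h' b)^2) / real (card (InjS N T)))"
    by (rule cov_pure[OF fS disj cS cT neS neT True fr' hr' s0 t0])
  then show ?thesis unfolding a_def[symmetric] b_def[symmetric] eV vS vT by simp
qed



definition ee :: "nat \<Rightarrow> (nat \<Rightarrow> nat \<Rightarrow> real) \<Rightarrow> nat \<Rightarrow> nat \<Rightarrow> real" where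
  "ee N Y r i = Y i r - Ybar N Y r"

definition Pz :: "nat \<Rightarrow> (nat \<Rightarrow> nat \<Rightarrow> real) \<Rightarrow> (nat \<Rightarrow> real) \<Rightarrow> nat \<Rightarrow> nat \<Rightarrow> (nat \<Rightarrow> nat) \<Rightarrow> real" where
  "Pz N Y dd r s z = (dd r + ee N Y r (unitz N z r)) * (dd s + ee N Y s (unitz N z s))"

lemma InjS_single: "bij_betw (\<lambda>k. k r) (InjS N {r}) {..<N}"
proof -
  have "inj_on (\<lambda>k. k r) (InjS N {r})"
  proof (rule inj_onI)
    fix k1 k2 assume k: "k1 \<in> InjS N {r}" "k2 \<in> InjS N {r}" "k1 r = k2 r"
    have e: "k1 \<in> extensional {r}" "k2 \<in> extensional {r}" using k(1,2) unfolding InjS_def by (auto simp: PiE_def)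
    show "k1 = k2" by (rule extensionalityI[OF e]) (use k(3) in simp)
  qed
  moreover have "(\<lambda>k. k r) ` InjS N {r} = {..<N}"
  proof (intro set_eqI iffI)
    fix i assume "i \<in> (\<lambda>k. k r) ` InjS N {r}"
    then show "i \<in> {..<N}" unfolding InjS_def by (auto simp: PiE_def Pi_def)
  next
    fix i assume i: "i \<in> {..<N}"
    have "restrict (\<lambda>_. i) {r} \<in> InjS N {r}" using i unfolding InjS_def by (auto simp: PiE_def Pi_def)
    moreover have "restrict (\<lambda>_. i) {r} r = i" by simp
    ultimately show "i \<in> (\<lambda>k. k r) ` InjS N {r}" by (metis image_eqI)
  qed
  ultimately show ?thesis unfolding bij_betw_def by simp
qed

lemma E_unit:
  assumes ne: "assignments N Q Nq \<noteq> {}" and r: "r \<in> QU Q Nq"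
  shows "expect_cr N Q Nq (\<lambda>z. \<phi> (unitz N z r)) = (\<Sum>i<N. \<phi> i) / real N"
proof -
  have "expect_cr N Q Nq (\<lambda>z. \<phi> (unitz N z r)) = expect_cr N Q Nq (\<lambda>z. (\<lambda>k. \<phi> (k r)) (restrict (unitz N z) {r}))"
    by (rule E_cong) simp
  also have "\<dots> = (\<Sum>k\<in>InjS N {r}. \<phi> (k r)) / card (InjS N {r})"
    by (rule expect_restrict) (use r ne in auto)
  also have "(\<Sum>k\<in>InjS N {r}. \<phi> (k r)) = (\<Sum>i<N. \<phi> i)"
    by (rule sum.reindex_bij_betw[OF InjS_single])
  also have "card (InjS N {r}) = N" using bij_betw_same_card[OF InjS_single[of r N]] by simp
  finally show ?thesis .
qed

lemma unit_N_pos: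
  assumes ne: "assignments N Q Nq \<noteq> {}" and r: "r \<in> QU Q Nq"
  shows "0 < N"
proof -
  obtain z where "z \<in> assignments N Q Nq" using ne by blast
  from unitz_props(1)[OF this r] show ?thesis by simp
qed

lemma m4:
  assumes ne: "assignments N Q Nq \<noteq> {}" and r: "r \<in> QU Q Nq"
    and h3: "\<forall>q<Q. (\<Sum>i<N. (Y i q - Ybar N Y q)^4) / real N \<le> \<Delta>^4"
  shows "expect_cr N Q Nq (\<lambda>z. (ee N Y r (unitz N z r))^4) \<le> \<Delta>^4"
proof -
  have "r < Q" using r unfolding QU_def by simp
  then have "(\<Sum>i<N. (ee N Y r i)^4) / real N \<le> \<Delta>^4" using h3 unfolding ee_def by simp
  then show ?thesis using E_unit[OF ne r, of "\<lambda>i. (ee N Y r i)^4"] by simp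
qed

lemma m2:
  assumes ne: "assignments N Q Nq \<noteq> {}" and r: "r \<in> QU Q Nq"
    and h3: "\<forall>q<Q. (\<Sum>i<N. (Y i q - Ybar N Y q)^4) / real N \<le> \<Delta>^4"
  shows "expect_cr N Q Nq (\<lambda>z. (ee N Y r (unitz N z r))^2) \<le> \<Delta>^2"
proof -
  have N: "0 < real N" using unit_N_pos[OF ne r] by simp
  have r4: "(\<Sum>i<N. (ee N Y r i)^4) / real N \<le> \<Delta>^4"
    using m4[OF ne r h3] E_unit[OF ne r, of "\<lambda>i. (ee N Y r i)^4"] by simp
  have cs: "(\<Sum>i<N. (ee N Y r i)^2)^2 \<le> (\<Sum>i<N. ((ee N Y r i)^2)^2) * real N"
    using sum_squared_le_sum_of_squares[of "\<lambda>i. (ee N Y r i)^2" "{..<N}"] by simp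
  have "((\<Sum>i<N. (ee N Y r i)^2) / real N)^2 = (\<Sum>i<N. (ee N Y r i)^2)^2 / (real N * real N)"
    by (simp add: power2_eq_square)
  also have "\<dots> \<le> (\<Sum>i<N. ((ee N Y r i)^2)^2) * real N / (real N * real N)"
    by (rule divide_right_mono[OF cs]) simp
  also have "\<dots> = (\<Sum>i<N. (ee N Y r i)^4) / real N" using N by (simp add: power2_eq_square power4_eq_xxxx mult.assoc)
  also have "\<dots> \<le> (\<Delta>^2)^2" using r4 by (simp add: power2_eq_square power4_eq_xxxx)
  finally have "((\<Sum>i<N. (ee N Y r i)^2) / real N)^2 \<le> (\<Delta>^2)^2" .
  then have "(\<Sum>i<N. (ee N Y r i)^2) / real N \<le> \<Delta>^2" by (rule power2_le_imp_le) simp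
  then show ?thesis using E_unit[OF ne r, of "\<lambda>i. (ee N Y r i)^2"] by simp
qed

lemma sq3: "((a::real) + b + c)^2 \<le> 3 * (a^2 + b^2 + c^2)"
proof -
  have "0 \<le> (a - b)^2 + (b - c)^2 + (a - c)^2" by simp
  then show ?thesis by (simp add: power2_eq_square algebra_simps)
qed

lemma ab4: "((a::real) * b)^2 \<le> (a^4 + b^4) / 2"
proof -
  have "(a * b)^2 = (a^4 + b^4) / 2 - (a^2 - b^2)^2 / 2"
    by (simp add: power2_eq_square power4_eq_xxxx field_simps)
  moreover have "0 \<le> (a^2 - b^2)^2 / 2" by simp
  ultimately show ?thesis by linarith
qed

lemma varP:
  assumes ne: "assignments N Q Nq \<noteq> {}" and r: "r \<in> QU Q Nq" and s: "s \<in> QU Q Nq"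
    and h3: "\<forall>q<Q. (\<Sum>i<N. (Y i q - Ybar N Y q)^4) / real N \<le> \<Delta>^4"
    and dr: "\<bar>dd r\<bar> \<le> \<zeta>" and ds: "\<bar>dd s\<bar> \<le> \<zeta>"
  shows "expect_cr N Q Nq (\<lambda>z. (Pz N Y dd r s z - expect_cr N Q Nq (Pz N Y dd r s))^2) \<le> 6 * (\<zeta>^2 * \<Delta>^2 + \<Delta>^4)"
proof -
  let ?E = "expect_cr N Q Nq"
  let ?er = "\<lambda>z. ee N Y r (unitz N z r)"
  let ?es = "\<lambda>z. ee N Y s (unitz N z s)"
  have d2: "(dd r)^2 \<le> \<zeta>^2" "(dd s)^2 \<le> \<zeta>^2"
    using dr ds by (metis abs_ge_zero power2_abs power_mono)+
  have "?E (\<lambda>z. (Pz N Y dd r s z - ?E (Pz N Y dd r s))^2) \<le> ?E (\<lambda>z. (Pz N Y dd r s z - dd r * dd s)^2)"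
    by (rule E_var_le[OF ne])
  also have "\<dots> \<le> ?E (\<lambda>z. 3 * (\<zeta>^2 * (?es z)^2 + \<zeta>^2 * (?er z)^2 + ((?er z)^4 + (?es z)^4) / 2))"
  proof (rule E_mono)
    fix z
    have "(Pz N Y dd r s z - dd r * dd s)^2 = (dd r * ?es z + dd s * ?er z + ?er z * ?es z)^2"
      unfolding Pz_def by (simp add: algebra_simps)
    also have "\<dots> \<le> 3 * ((dd r * ?es z)^2 + (dd s * ?er z)^2 + (?er z * ?es z)^2)" by (rule sq3)
    also have "\<dots> \<le> 3 * (\<zeta>^2 * (?es z)^2 + \<zeta>^2 * (?er z)^2 + ((?er z)^4 + (?es z)^4) / 2)"
    proof -
      have 1: "(dd r * ?es z)^2 \<le> \<zeta>^2 * (?es z)^2"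
        unfolding power_mult_distrib by (rule mult_right_mono[OF d2(1)]) simp
      have 2: "(dd s * ?er z)^2 \<le> \<zeta>^2 * (?er z)^2"
        unfolding power_mult_distrib by (rule mult_right_mono[OF d2(2)]) simp
      have 3: "(?er z * ?es z)^2 \<le> ((?er z)^4 + (?es z)^4) / 2" by (rule ab4)
      show ?thesis by (rule mult_left_mono[OF add_mono[OF add_mono[OF 1 2] 3]]) simp
    qed
    finally show "(Pz N Y dd r s z - dd r * dd s)^2 \<le> 3 * (\<zeta>^2 * (?es z)^2 + \<zeta>^2 * (?er z)^2 + ((?er z)^4 + (?es z)^4) / 2)" .
  qed
  also have "\<dots> = 3 * (\<zeta>^2 * ?E (\<lambda>z. (?es z)^2) + \<zeta>^2 * ?E (\<lambda>z. (?er z)^2) + (?E (\<lambda>z. (?er z)^4) + ?E (\<lambda>z. (?es z)^4)) / 2)"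
    by (simp add: E_add E_cmult E_div)
  also have "\<dots> \<le> 3 * (\<zeta>^2 * \<Delta>^2 + \<zeta>^2 * \<Delta>^2 + (\<Delta>^4 + \<Delta>^4) / 2)"
  proof -
    have a: "\<zeta>^2 * ?E (\<lambda>z. (?es z)^2) \<le> \<zeta>^2 * \<Delta>^2" by (rule mult_left_mono[OF m2[OF ne s h3]]) simp
    have b: "\<zeta>^2 * ?E (\<lambda>z. (?er z)^2) \<le> \<zeta>^2 * \<Delta>^2" by (rule mult_left_mono[OF m2[OF ne r h3]]) simp
    show ?thesis
      by (rule mult_left_mono[OF add_mono[OF add_mono[OF a b] divide_right_mono[OF add_mono[OF m4[OF ne r h3] m4[OF ne s h3]]]]]) simp_all
  qed
  also have "\<dots> = 6 * (\<zeta>^2 * \<Delta>^2) + 3 * \<Delta>^4" by (simp add: algebra_simps)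
  also have "\<dots> \<le> 6 * (\<zeta>^2 * \<Delta>^2 + \<Delta>^4)"
  proof -
    have "0 \<le> \<Delta>^4" by simp
    then show ?thesis by (simp add: algebra_simps)
  qed
  finally show ?thesis .
qed

lemma covP:
  assumes ne: "assignments N Q Nq \<noteq> {}"
    and U: "r \<in> QU Q Nq" "s \<in> QU Q Nq" "t \<in> QU Q Nq" "u \<in> QU Q Nq"
    and h3: "\<forall>q<Q. (\<Sum>i<N. (Y i q - Ybar N Y q)^4) / real N \<le> \<Delta>^4"
    and dd: "\<forall>q\<in>QU Q Nq. \<bar>dd q\<bar> \<le> \<zeta>"
  shows "\<bar>expect_cr N Q Nq (\<lambda>z. (Pz N Y dd r s z - expect_cr N Q Nq (Pz N Y dd r s)) * (Pz N Y dd t u z - expect_cr N Q Nq (Pz N Y dd t u)))\<bar>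
     \<le> 6 * (\<zeta>^2 * \<Delta>^2 + \<Delta>^4) * ((if r = t then 1 else 0) + (if r = u then 1 else 0) + (if s = t then 1 else 0) + (if s = u then 1 else 0))
       + 384 * (\<zeta>^2 * \<Delta>^2 + \<Delta>^4) / real N"
proof -
  let ?E = "expect_cr N Q Nq"
  let ?M = "\<zeta>^2 * \<Delta>^2 + \<Delta>^4"
  let ?L = "\<bar>?E (\<lambda>z. (Pz N Y dd r s z - ?E (Pz N Y dd r s)) * (Pz N Y dd t u z - ?E (Pz N Y dd t u)))\<bar>"
  let ?ind = "(if r = t then 1 else 0) + (if r = u then 1 else 0) + (if s = t then 1 else 0) + (if s = u then (1::real) else 0)"
  have v1: "?E (\<lambda>z. (Pz N Y dd r s z - ?E (Pz N Y dd r s))^2) \<le> 6 * ?M"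
    by (rule varP[OF ne U(1,2) h3]) (use dd U in auto)
  have v2: "?E (\<lambda>z. (Pz N Y dd t u z - ?E (Pz N Y dd t u))^2) \<le> 6 * ?M"
    by (rule varP[OF ne U(3,4) h3]) (use dd U in auto)
  have M0: "0 \<le> ?M" by simp
  have N0: "0 < real N" using unit_N_pos[OF ne U(1)] by simp
  have ind0: "0 \<le> ?ind" by simp
  show ?thesis
  proof (cases "{r, s} \<inter> {t, u} = {}")
    case False
    then have "1 \<le> ?ind" by auto
    have "?L \<le> (?E (\<lambda>z. (Pz N Y dd r s z - ?E (Pz N Y dd r s))^2) + ?E (\<lambda>z. (Pz N Y dd t u z - ?E (Pz N Y dd t u))^2)) / 2"
      by (rule E_cov_cs)
    also have "\<dots> \<le> (6 * ?M + 6 * ?M) / 2" by (rule divide_right_mono[OF add_mono[OF v1 v2]]) simp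
    also have "\<dots> = 6 * ?M * 1" by simp
    also have "\<dots> \<le> 6 * ?M * ?ind" by (rule mult_left_mono[OF \<open>1 \<le> ?ind\<close>]) (use M0 in simp)
    also have "\<dots> \<le> 6 * ?M * ?ind + 384 * ?M / real N" using M0 N0 by simp
    finally show ?thesis .
  next
    case True
    define f :: "(nat \<Rightarrow> nat) \<Rightarrow> real" where "f = (\<lambda>k. (dd r + ee N Y r (k r)) * (dd s + ee N Y s (k s)))"
    define h :: "(nat \<Rightarrow> nat) \<Rightarrow> real" where "h = (\<lambda>k. (dd t + ee N Y t (k t)) * (dd u + ee N Y u (k u)))"
    have cS: "card {r, s} \<le> 2" "card {t, u} \<le> 2" by (auto simp: card_insert_if)
    have fr: "\<And>k. f k = f (restrict k {r, s})" unfolding f_def by simp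
    have hr: "\<And>k. h k = h (restrict k {t, u})" unfolding h_def by simp
    have Fe: "\<And>z. f (restrict (unitz N z) {r, s}) = Pz N Y dd r s z" unfolding f_def Pz_def by auto
    have He: "\<And>z. h (restrict (unitz N z) {t, u}) = Pz N Y dd t u z" unfolding h_def Pz_def by auto
    have SU: "{r, s} \<subseteq> QU Q Nq" "{t, u} \<subseteq> QU Q Nq" using U by auto
    have N1: "1 \<le> N" using N0 by simp
    note c = cov_z[where S="{r, s}" and T="{t, u}" and f=f and h=h, OF ne SU(1) SU(2) True cS(1) cS(2) _ _ N1 fr hr]
    have "?L \<le> 32 / real N * (?E (\<lambda>z. (Pz N Y dd r s z - ?E (Pz N Y dd r s))^2) + ?E (\<lambda>z. (Pz N Y dd t u z - ?E (Pz N Y dd t u))^2))"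
      using c by (simp only: Fe He insert_not_empty simp_thms)
    also have "\<dots> \<le> 32 / real N * (6 * ?M + 6 * ?M)"
      by (rule mult_left_mono[OF add_mono[OF v1 v2]]) (use N0 in simp)
    also have "\<dots> = 384 * ?M / real N" by simp
    also have "\<dots> \<le> 6 * ?M * ?ind + 384 * ?M / real N" using M0 ind0 by simp
    finally show ?thesis .
  qed
qed



definition indp :: "nat \<times> nat \<Rightarrow> nat \<times> nat \<Rightarrow> real" where
  "indp p p' = (if fst p = fst p' then 1 else 0) + (if fst p = snd p' then 1 else 0)
             + (if snd p = fst p' then 1 else 0) + (if snd p = snd p' then 1 else 0)"

lemma delta_row:
  fixes W :: "nat \<Rightarrow> nat \<Rightarrow> real"
  assumes fin: "finite U" and x: "x \<in> U"
  shows "(\<Sum>p'\<in>U \<times> U. \<bar>W (fst p') (snd p')\<bar> * (if x = fst p' then 1 else 0)) = (\<Sum>u\<in>U. \<bar>W x u\<bar>)"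
    and "(\<Sum>p'\<in>U \<times> U. \<bar>W (fst p') (snd p')\<bar> * (if x = snd p' then 1 else 0)) = (\<Sum>t\<in>U. \<bar>W t x\<bar>)"
proof -
  have "(\<Sum>p'\<in>U \<times> U. \<bar>W (fst p') (snd p')\<bar> * (if x = fst p' then 1 else 0))
      = (\<Sum>t\<in>U. \<Sum>u\<in>U. \<bar>W t u\<bar> * (if x = t then 1 else 0))"
    by (simp add: sum.cartesian_product case_prod_beta)
  also have "\<dots> = (\<Sum>t\<in>U. if x = t then (\<Sum>u\<in>U. \<bar>W t u\<bar>) else 0)"
    by (rule sum.cong[OF refl]) auto
  also have "\<dots> = (\<Sum>u\<in>U. \<bar>W x u\<bar>)" using fin x by simp
  finally show "(\<Sum>p'\<in>U \<times> U. \<bar>W (fst p') (snd p')\<bar> * (if x = fst p' then 1 else 0)) = (\<Sum>u\<in>U. \<bar>W x u\<bar>)" .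
  have "(\<Sum>p'\<in>U \<times> U. \<bar>W (fst p') (snd p')\<bar> * (if x = snd p' then 1 else 0))
      = (\<Sum>t\<in>U. \<Sum>u\<in>U. \<bar>W t u\<bar> * (if x = u then 1 else 0))"
    by (simp add: sum.cartesian_product case_prod_beta)
  also have "\<dots> = (\<Sum>t\<in>U. \<bar>W t x\<bar>)"
  proof (rule sum.cong[OF refl])
    fix t
    have "(\<Sum>u\<in>U. \<bar>W t u\<bar> * (if x = u then 1 else 0)) = (\<Sum>u\<in>U. if x = u then \<bar>W t u\<bar> else 0)"
      by (rule sum.cong[OF refl]) auto
    also have "\<dots> = \<bar>W t x\<bar>" using fin x by simp
    finally show "(\<Sum>u\<in>U. \<bar>W t u\<bar> * (if x = u then 1 else 0)) = \<bar>W t x\<bar>" .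
  qed
  finally show "(\<Sum>p'\<in>U \<times> U. \<bar>W (fst p') (snd p')\<bar> * (if x = snd p' then 1 else 0)) = (\<Sum>t\<in>U. \<bar>W t x\<bar>)" .
qed

lemma quad_bound:
  fixes W :: "nat \<Rightarrow> nat \<Rightarrow> real" and Cv :: "nat \<times> nat \<Rightarrow> nat \<times> nat \<Rightarrow> real"
  assumes fin: "finite U" and sym: "\<And>r s. W r s = W s r"
    and row: "\<And>r. r \<in> U \<Longrightarrow> (\<Sum>s\<in>U. \<bar>W r s\<bar>) \<le> \<rho>"
    and cv: "\<And>p p'. p \<in> U \<times> U \<Longrightarrow> p' \<in> U \<times> U \<Longrightarrow> \<bar>Cv p p'\<bar> \<le> a * indp p p' + b"
    and a0: "0 \<le> a" and b0: "0 \<le> b"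
  shows "\<bar>\<Sum>p\<in>U \<times> U. \<Sum>p'\<in>U \<times> U. W (fst p) (snd p) * W (fst p') (snd p') * Cv p p'\<bar>
       \<le> (\<Sum>p\<in>U \<times> U. \<bar>W (fst p) (snd p)\<bar>) * (4 * a * \<rho> + b * (\<Sum>p'\<in>U \<times> U. \<bar>W (fst p') (snd p')\<bar>))"
proof -
  let ?I = "U \<times> U"
  let ?w = "\<lambda>p. \<bar>W (fst p) (snd p)\<bar>"
  have fI: "finite ?I" using fin by simp
  have col: "(\<Sum>t\<in>U. \<bar>W t x\<bar>) \<le> \<rho>" if "x \<in> U" for x
    using row[OF that] by (simp add: sym)
  have inner: "(\<Sum>p'\<in>?I. ?w p' * indp p p') \<le> 4 * \<rho>" if p: "p \<in> ?I" for p
  proof -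
    have "(\<Sum>p'\<in>?I. ?w p' * indp p p')
        = (\<Sum>p'\<in>?I. ?w p' * (if fst p = fst p' then 1 else 0)) + (\<Sum>p'\<in>?I. ?w p' * (if fst p = snd p' then 1 else 0))
        + (\<Sum>p'\<in>?I. ?w p' * (if snd p = fst p' then 1 else 0)) + (\<Sum>p'\<in>?I. ?w p' * (if snd p = snd p' then 1 else 0))"
      unfolding indp_def by (simp add: distrib_left sum.distrib)
    also have "\<dots> = (\<Sum>u\<in>U. \<bar>W (fst p) u\<bar>) + (\<Sum>t\<in>U. \<bar>W t (fst p)\<bar>) + (\<Sum>u\<in>U. \<bar>W (snd p) u\<bar>) + (\<Sum>t\<in>U. \<bar>W t (snd p)\<bar>)"
      using p delta_row[OF fin, of "fst p" W] delta_row[OF fin, of "snd p" W] by (auto simp: mem_Times_iff)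
    also have "\<dots> \<le> \<rho> + \<rho> + \<rho> + \<rho>"
      using p row[of "fst p"] row[of "snd p"] col[of "fst p"] col[of "snd p"] by (auto simp: mem_Times_iff intro!: add_mono)
    finally show ?thesis by simp
  qed
  have "\<bar>\<Sum>p\<in>?I. \<Sum>p'\<in>?I. W (fst p) (snd p) * W (fst p') (snd p') * Cv p p'\<bar>
      \<le> (\<Sum>p\<in>?I. \<bar>\<Sum>p'\<in>?I. W (fst p) (snd p) * W (fst p') (snd p') * Cv p p'\<bar>)" by (rule sum_abs)
  also have "\<dots> \<le> (\<Sum>p\<in>?I. \<Sum>p'\<in>?I. ?w p * ?w p' * (a * indp p p' + b))"
  proof (rule sum_mono)
    fix p assume p: "p \<in> ?I"
    have "\<bar>\<Sum>p'\<in>?I. W (fst p) (snd p) * W (fst p') (snd p') * Cv p p'\<bar>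
        \<le> (\<Sum>p'\<in>?I. \<bar>W (fst p) (snd p) * W (fst p') (snd p') * Cv p p'\<bar>)" by (rule sum_abs)
    also have "\<dots> \<le> (\<Sum>p'\<in>?I. ?w p * ?w p' * (a * indp p p' + b))"
    proof (rule sum_mono)
      fix p' assume p': "p' \<in> ?I"
      have "\<bar>W (fst p) (snd p) * W (fst p') (snd p') * Cv p p'\<bar> = ?w p * ?w p' * \<bar>Cv p p'\<bar>"
        by (simp add: abs_mult)
      also have "\<dots> \<le> ?w p * ?w p' * (a * indp p p' + b)"
        by (rule mult_left_mono[OF cv[OF p p']]) simp
      finally show "\<bar>W (fst p) (snd p) * W (fst p') (snd p') * Cv p p'\<bar> \<le> ?w p * ?w p' * (a * indp p p' + b)" .
    qed
    finally show "\<bar>\<Sum>p'\<in>?I. W (fst p) (snd p) * W (fst p') (snd p') * Cv p p'\<bar> \<le> (\<Sum>p'\<in>?I. ?w p * ?w p' * (a * indp p p' + b))" .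
  qed
  also have "\<dots> = (\<Sum>p\<in>?I. ?w p * (a * (\<Sum>p'\<in>?I. ?w p' * indp p p') + b * (\<Sum>p'\<in>?I. ?w p')))"
    by (rule sum.cong[OF refl]) (simp add: sum_distrib_left sum.distrib algebra_simps)
  also have "\<dots> \<le> (\<Sum>p\<in>?I. ?w p * (4 * a * \<rho> + b * (\<Sum>p'\<in>?I. ?w p')))"
  proof (rule sum_mono)
    fix p assume p: "p \<in> ?I"
    have "a * (\<Sum>p'\<in>?I. ?w p' * indp p p') \<le> a * (4 * \<rho>)" by (rule mult_left_mono[OF inner[OF p] a0])
    then show "?w p * (a * (\<Sum>p'\<in>?I. ?w p' * indp p p') + b * (\<Sum>p'\<in>?I. ?w p'))
        \<le> ?w p * (4 * a * \<rho> + b * (\<Sum>p'\<in>?I. ?w p'))"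
      by (intro mult_left_mono) auto
  qed
  also have "\<dots> = (\<Sum>p\<in>?I. ?w p) * (4 * a * \<rho> + b * (\<Sum>p'\<in>?I. ?w p'))" by (simp add: sum_distrib_right)
  finally show ?thesis .
qed

lemma total_row:
  fixes W :: "nat \<Rightarrow> nat \<Rightarrow> real"
  assumes fin: "finite U" and row: "\<And>r. r \<in> U \<Longrightarrow> (\<Sum>s\<in>U. \<bar>W r s\<bar>) \<le> \<rho>"
  shows "(\<Sum>p\<in>U \<times> U. \<bar>W (fst p) (snd p)\<bar>) \<le> \<rho> * real (card U)"
proof -
  have "(\<Sum>p\<in>U \<times> U. \<bar>W (fst p) (snd p)\<bar>) = (\<Sum>r\<in>U. \<Sum>s\<in>U. \<bar>W r s\<bar>)"
    by (simp add: sum.cartesian_product case_prod_beta)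
  also have "\<dots> \<le> (\<Sum>r\<in>U. \<rho>)" by (rule sum_mono) (rule row)
  also have "\<dots> = \<rho> * real (card U)" by simp
  finally show ?thesis .
qed



lemma Yobs_unitz: "Yobs N Y z q = Y (unitz N z q) q"
  unfolding Yobs_def unitz_def by simp

lemma abs_cc_sum:
  assumes fin: "finite S" and k: "card S \<ge> 2"
  shows "(\<Sum>s\<in>S. \<bar>(if q = s then 1 else 0) - 1 / real (card S)\<bar>) \<le> 2"
    and "(\<Sum>s\<in>S. \<bar>(if s = q then 1 else 0) - 1 / real (card S)\<bar>) \<le> 2"
proof -
  have kp: "0 < real (card S)" using k by simp
  have b: "\<bar>(if q = s then 1 else 0) - 1 / real (card S)\<bar> \<le> (if q = s then 1 else 0) + 1 / real (card S)" for s
    using kp by (auto simp: abs_if)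
  have 1: "(\<Sum>s\<in>S. \<bar>(if q = s then 1 else 0) - 1 / real (card S)\<bar>) \<le> (\<Sum>s\<in>S. (if q = s then 1 else 0) + 1 / real (card S))"
    by (rule sum_mono) (rule b)
  have 2: "(\<Sum>s\<in>S. (if q = s then 1 else 0) + 1 / real (card S)) = (\<Sum>s\<in>S. (if q = s then 1 else 0)) + (\<Sum>s\<in>S. 1 / real (card S))"
    by (rule sum.distrib)
  have 3: "(\<Sum>s\<in>S. 1 / real (card S)) = 1" using kp by simp
  have 4: "(\<Sum>s\<in>S. (if q = s then 1 else (0::real))) = (if q \<in> S then 1 else 0)"
    using fin by (rule sum.delta')
  have 5: "(if q \<in> S then 1 else (0::real)) \<le> 1" by simp
  have "(\<Sum>s\<in>S. \<bar>(if q = s then 1 else 0) - 1 / real (card S)\<bar>) \<le> 2" using 1 2 3 4 5 by linarith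
  then show "(\<Sum>s\<in>S. \<bar>(if q = s then 1 else 0) - 1 / real (card S)\<bar>) \<le> 2" .
  show "(\<Sum>s\<in>S. \<bar>(if s = q then 1 else 0) - 1 / real (card S)\<bar>) \<le> 2"
  proof -
    have "(\<Sum>s\<in>S. \<bar>(if s = q then 1 else 0) - 1 / real (card S)\<bar>) = (\<Sum>s\<in>S. \<bar>(if q = s then 1 else 0) - 1 / real (card S)\<bar>)"
      by (rule sum.cong) auto
    then show ?thesis using \<open>(\<Sum>s\<in>S. \<bar>(if q = s then 1 else 0) - 1 / real (card S)\<bar>) \<le> 2\<close> by simp
  qed
qed

lemma group_lin:
  fixes Yo Zf :: "nat \<Rightarrow> real"
  assumes fin: "finite S" and k: "card S \<ge> 2" and Z: "\<And>r. r \<in> S \<Longrightarrow> Zf r = Yo r - m" and q: "q \<in> S"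
  shows "Yo q - (\<Sum>r\<in>S. Yo r) / real (card S) = (\<Sum>r\<in>S. ((if q = r then 1 else 0) - 1 / real (card S)) * Zf r)"
proof -
  let ?k = "real (card S)"
  have kp: "0 < ?k" using k by simp
  have "(\<Sum>r\<in>S. ((if q = r then 1 else 0) - 1 / ?k) * Zf r) = (\<Sum>r\<in>S. (if q = r then Zf r else 0) - Zf r / ?k)"
    by (rule sum.cong[OF refl]) (simp add: algebra_simps)
  also have "\<dots> = (\<Sum>r\<in>S. (if q = r then Zf r else 0)) - (\<Sum>r\<in>S. Zf r / ?k)"
    by (rule sum_subtractf)
  also have "(\<Sum>r\<in>S. (if q = r then Zf r else 0)) = Zf q" using fin q by simp
  also have "(\<Sum>r\<in>S. Zf r / ?k) = (\<Sum>r\<in>S. Zf r) / ?k" by (simp add: sum_divide_distrib)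
  also have "(\<Sum>r\<in>S. Zf r) = (\<Sum>r\<in>S. Yo r - m)" by (rule sum.cong[OF refl]) (simp add: Z)
  also have "\<dots> = (\<Sum>r\<in>S. Yo r) - ?k * m" by (simp add: sum_subtractf)
  finally have e: "(\<Sum>r\<in>S. ((if q = r then 1 else 0) - 1 / ?k) * Zf r) = Zf q - ((\<Sum>r\<in>S. Yo r) - ?k * m) / ?k" .
  have "Zf q - ((\<Sum>r\<in>S. Yo r) - ?k * m) / ?k = Yo q - (\<Sum>r\<in>S. Yo r) / ?k"
    unfolding Z[OF q] using kp by (simp add: field_simps)
  then show ?thesis using e by simp
qed

lemma group_quad:
  fixes Yo Zf w :: "nat \<Rightarrow> real"
  assumes fin: "finite S" and k: "card S \<ge> 2" and Z: "\<And>r. r \<in> S \<Longrightarrow> Zf r = Yo r - m"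
  shows "(\<Sum>q\<in>S. w q * (Yo q - (\<Sum>r\<in>S. Yo r) / real (card S))^2)
       = (\<Sum>r\<in>S. \<Sum>s\<in>S. (\<Sum>q\<in>S. w q * ((if q = r then 1 else 0) - 1 / real (card S)) * ((if q = s then 1 else 0) - 1 / real (card S))) * (Zf r * Zf s))"
proof -
  define c :: "nat \<Rightarrow> nat \<Rightarrow> real" where "c = (\<lambda>q r. ((if q = r then 1 else 0) - 1 / real (card S)) :: real)"
  have "(\<Sum>q\<in>S. w q * (Yo q - (\<Sum>r\<in>S. Yo r) / real (card S))^2)
      = (\<Sum>q\<in>S. w q * (\<Sum>r\<in>S. c q r * Zf r)^2)"
  proof (rule sum.cong[OF refl])
    fix q assume q: "q \<in> S"
    show "w q * (Yo q - (\<Sum>r\<in>S. Yo r) / real (card S))^2 = w q * (\<Sum>r\<in>S. c q r * Zf r)^2"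
      using group_lin[where S=S and Yo=Yo and Zf=Zf and m=m and q=q, OF fin k Z q] by (simp add: c_def)
  qed
  also have "\<dots> = (\<Sum>q\<in>S. \<Sum>r\<in>S. \<Sum>s\<in>S. w q * c q r * c q s * (Zf r * Zf s))"
  proof (rule sum.cong[OF refl])
    fix q
    have "(\<Sum>r\<in>S. c q r * Zf r)^2 = (\<Sum>r\<in>S. c q r * Zf r) * (\<Sum>s\<in>S. c q s * Zf s)"
      by (simp add: power2_eq_square)
    also have "\<dots> = (\<Sum>r\<in>S. \<Sum>s\<in>S. c q r * Zf r * (c q s * Zf s))" by (rule sum_product)
    finally show "w q * (\<Sum>r\<in>S. c q r * Zf r)^2 = (\<Sum>r\<in>S. \<Sum>s\<in>S. w q * c q r * c q s * (Zf r * Zf s))"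
      by (simp add: sum_distrib_left algebra_simps)
  qed
  also have "\<dots> = (\<Sum>r\<in>S. \<Sum>q\<in>S. \<Sum>s\<in>S. w q * c q r * c q s * (Zf r * Zf s))"
    by (rule sum.swap)
  also have "\<dots> = (\<Sum>r\<in>S. \<Sum>s\<in>S. \<Sum>q\<in>S. w q * c q r * c q s * (Zf r * Zf s))"
    by (rule sum.cong[OF refl]) (rule sum.swap)
  also have "\<dots> = (\<Sum>r\<in>S. \<Sum>s\<in>S. (\<Sum>q\<in>S. w q * c q r * c q s) * (Zf r * Zf s))"
    by (simp add: sum_distrib_right)
  finally show ?thesis unfolding c_def .
qed



lemma final_arith:
  fixes SB \<rho> M n N :: real
  assumes SB0: "0 \<le> SB" and SB: "SB \<le> \<rho> * n" and r0: "0 \<le> \<rho>" and M0: "0 \<le> M" and n0: "0 \<le> n" and nN: "n \<le> N"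
  shows "SB * (4 * (6 * M) * \<rho> + 384 * M / N * SB) \<le> 408 * \<rho>^2 * M * n"
proof -
  have h1: "SB * (4 * (6 * M) * \<rho>) \<le> (\<rho> * n) * (4 * (6 * M) * \<rho>)"
    by (rule mult_right_mono[OF SB]) (use M0 r0 in simp)
  have h1': "(\<rho> * n) * (4 * (6 * M) * \<rho>) = 24 * \<rho>^2 * M * n" by (simp add: power2_eq_square algebra_simps)
  have h2: "SB * (384 * M / N * SB) \<le> 384 * \<rho>^2 * M * n"
  proof (cases "N = 0")
    case True then show ?thesis using r0 M0 n0 by simp
  next
    case False
    then have Np: "0 < N" using nN n0 by simp
    have ss: "SB * SB \<le> (\<rho> * n) * (\<rho> * n)" by (rule mult_mono[OF SB SB]) (use r0 n0 SB0 in simp_all)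
    have "SB * (384 * M / N * SB) = (384 * M / N) * (SB * SB)" by (simp add: algebra_simps)
    also have "\<dots> \<le> (384 * M / N) * ((\<rho> * n) * (\<rho> * n))" by (rule mult_left_mono[OF ss]) (use M0 Np in simp)
    also have "\<dots> = 384 * \<rho>^2 * M * n * (n / N)" by (simp add: power2_eq_square algebra_simps)
    also have "\<dots> \<le> 384 * \<rho>^2 * M * n * 1"
      by (rule mult_left_mono) (use nN Np r0 M0 n0 in \<open>simp_all add: divide_le_eq_1\<close>)
    finally show ?thesis by simp
  qed
  have "SB * (4 * (6 * M) * \<rho> + 384 * M / N * SB) = SB * (4 * (6 * M) * \<rho>) + SB * (384 * M / N * SB)"
    by (simp add: distrib_left)
  then show ?thesis using h1 h1' h2 by linarith
qed

lemma main_lemma: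
  fixes N Q :: nat and Nq :: "nat \<Rightarrow> nat" and Y :: "nat \<Rightarrow> nat \<Rightarrow> real" and G :: nat
    and grp :: "nat \<Rightarrow> nat set" and w :: "nat \<Rightarrow> real" and wbar \<Delta> \<zeta> t :: real
  assumes hU: "(\<Union>g<G. grp g) = QU Q Nq"
    and hdisj: "\<forall>g<G. \<forall>g'<G. g \<noteq> g' \<longrightarrow> grp g \<inter> grp g' = {}"
    and hcard: "\<forall>g<G. card (grp g) \<ge> 2"
    and h3: "\<forall>q<Q. (\<Sum>i<N. (Y i q - Ybar N Y q)^4) / real N \<le> \<Delta>^4"
    and h6: "\<forall>g<G. \<forall>q\<in>grp g. \<bar>Ybar N Y q - Ybar_grp N Y (grp g)\<bar> \<le> \<zeta>"
    and hw: "\<forall>q\<in>QU Q Nq. \<bar>w q\<bar> \<le> wbar" and t: "t > 0"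
  shows "prob_cr N Q Nq (\<lambda>z. \<bar>vhat N Y G grp w z - expect_cr N Q Nq (vhat N Y G grp w)\<bar> \<ge> t)
        \<le> 6528 * wbar^2 * (\<Delta>^4 + \<Delta>^2 * \<zeta>^2) * real (card (QU Q Nq)) / t^2"
proof (cases "assignments N Q Nq = {}")
  case True
  then have "prob_cr N Q Nq (\<lambda>z. \<bar>vhat N Y G grp w z - expect_cr N Q Nq (vhat N Y G grp w)\<bar> \<ge> t) = 0"
    unfolding prob_cr_def by simp
  moreover have "0 \<le> 6528 * wbar^2 * (\<Delta>^4 + \<Delta>^2 * \<zeta>^2) * real (card (QU Q Nq)) / t^2"
    by (intro divide_nonneg_nonneg mult_nonneg_nonneg add_nonneg_nonneg) auto
  ultimately show ?thesis by simp
next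
  case False
  note ne = False
  let ?U = "QU Q Nq"
  let ?I = "?U \<times> ?U"
  let ?E = "expect_cr N Q Nq"
  define n where "n = card ?U"
  have finU: "finite ?U" by (rule finite_QU)
  define gi where "gi = (\<lambda>r. THE g. g < G \<and> r \<in> grp g)"
  have gi_eq: "gi r = g" if "g < G" "r \<in> grp g" for r g
    unfolding gi_def
  proof (rule the_equality)
    show "g < G \<and> r \<in> grp g" using that by simp
    fix g' assume "g' < G \<and> r \<in> grp g'"
    then show "g' = g" using that hdisj by blast
  qed
  have gi_in: "gi r < G \<and> r \<in> grp (gi r)" if "r \<in> ?U" for r
  proof -
    from that hU obtain g where "g < G" "r \<in> grp g" by auto
    then show ?thesis using gi_eq by simp
  qed
  have grp_sub: "grp g \<subseteq> ?U" if "g < G" for g using hU that by auto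
  have grp_fin: "finite (grp g)" if "g < G" for g using finite_subset[OF grp_sub[OF that] finU] .
  define cc :: "nat \<Rightarrow> nat \<Rightarrow> nat \<Rightarrow> real" where
    "cc = (\<lambda>g q r. (if q = r then 1 else 0) - 1 / real (card (grp g)))"
  define B :: "nat \<Rightarrow> nat \<Rightarrow> real" where
    "B = (\<lambda>r s. if gi r = gi s then (\<Sum>q\<in>grp (gi r). w q * cc (gi r) q r * cc (gi r) q s) else 0)"
  define dd :: "nat \<Rightarrow> real" where "dd = (\<lambda>r. Ybar N Y r - Ybar_grp N Y (grp (gi r)))"
  define X where "X = (\<lambda>z. \<Sum>p\<in>?I. B (fst p) (snd p) * Pz N Y dd (fst p) (snd p) z)"
  have vX: "vhat N Y G grp w z = X z" for z
  proof -
    define Zf where "Zf = (\<lambda>r. dd r + ee N Y r (unitz N z r))"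
    have PZ: "Pz N Y dd r s z = Zf r * Zf s" for r s unfolding Pz_def Zf_def by simp
    have grp_eq: "(\<Sum>q\<in>grp g. w q * (Yobs N Y z q - Yhat_grp N Y z (grp g))^2)
        = (\<Sum>r\<in>grp g. \<Sum>s\<in>?U. B r s * Pz N Y dd r s z)" if g: "g < G" for g
    proof -
      let ?S = "grp g"
      have k: "card ?S \<ge> 2" using hcard g by simp
      have Z: "Zf r = Yobs N Y z r - Ybar_grp N Y ?S" if "r \<in> ?S" for r
        using gi_eq[OF g that] unfolding Zf_def dd_def ee_def Yobs_unitz by simp
      have "(\<Sum>q\<in>?S. w q * (Yobs N Y z q - Yhat_grp N Y z ?S)^2)
          = (\<Sum>q\<in>?S. w q * (Yobs N Y z q - (\<Sum>r\<in>?S. Yobs N Y z r) / real (card ?S))^2)"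
        unfolding Yhat_grp_def ..
      also have "\<dots> = (\<Sum>r\<in>?S. \<Sum>s\<in>?S. (\<Sum>q\<in>?S. w q * ((if q = r then 1 else 0) - 1 / real (card ?S)) * ((if q = s then 1 else 0) - 1 / real (card ?S))) * (Zf r * Zf s))"
        by (rule group_quad[where Zf=Zf and m="Ybar_grp N Y ?S", OF grp_fin[OF g] k Z])
      also have "\<dots> = (\<Sum>r\<in>?S. \<Sum>s\<in>?S. B r s * Pz N Y dd r s z)"
      proof (intro sum.cong refl)
        fix r s assume r: "r \<in> ?S" and s: "s \<in> ?S"
        have "gi r = g" "gi s = g" using gi_eq[OF g r] gi_eq[OF g s] by auto
        then show "(\<Sum>q\<in>?S. w q * ((if q = r then 1 else 0) - 1 / real (card ?S)) * ((if q = s then 1 else 0) - 1 / real (card ?S))) * (Zf r * Zf s)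
            = B r s * Pz N Y dd r s z"
          unfolding B_def cc_def PZ by simp
      qed
      also have "\<dots> = (\<Sum>r\<in>?S. \<Sum>s\<in>?U. B r s * Pz N Y dd r s z)"
      proof (rule sum.cong[OF refl])
        fix r assume r: "r \<in> ?S"
        show "(\<Sum>s\<in>?S. B r s * Pz N Y dd r s z) = (\<Sum>s\<in>?U. B r s * Pz N Y dd r s z)"
        proof (rule sum.mono_neutral_left[OF finU grp_sub[OF g]])
          show "\<forall>s\<in>?U - ?S. B r s * Pz N Y dd r s z = 0"
          proof
            fix s assume s: "s \<in> ?U - ?S"
            have "gi s \<noteq> g" using gi_in[of s] s by auto
            then have "gi r \<noteq> gi s" using gi_eq[OF g r] by simp
            then show "B r s * Pz N Y dd r s z = 0" unfolding B_def by simp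
          qed
        qed
      qed
      finally show ?thesis .
    qed
    have "vhat N Y G grp w z = (\<Sum>g<G. \<Sum>r\<in>grp g. \<Sum>s\<in>?U. B r s * Pz N Y dd r s z)"
      unfolding vhat_def by (rule sum.cong[OF refl]) (simp add: grp_eq)
    also have "\<dots> = (\<Sum>r\<in>(\<Union>g<G. grp g). \<Sum>s\<in>?U. B r s * Pz N Y dd r s z)"
      by (rule sum.UNION_disjoint[symmetric]) (use grp_fin hdisj in auto)
    also have "\<dots> = (\<Sum>r\<in>?U. \<Sum>s\<in>?U. B r s * Pz N Y dd r s z)" unfolding hU ..
    also have "\<dots> = X z" unfolding X_def by (simp add: sum.cartesian_product case_prod_beta)
    finally show ?thesis .
  qed
  have vXf: "vhat N Y G grp w = X" using vX by (rule ext)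
  have fI: "finite ?I" using finU by simp
  define P where "P = (\<lambda>p. Pz N Y dd (fst p) (snd p))"
  define Bp where "Bp = (\<lambda>p. B (fst p) (snd p))"
  define Cv where "Cv = (\<lambda>p p'. ?E (\<lambda>z. (P p z - ?E (P p)) * (P p' z - ?E (P p'))))"
  have Xd: "X = (\<lambda>z. \<Sum>p\<in>?I. Bp p * P p z)" unfolding X_def Bp_def P_def ..
  have EX: "?E X = (\<Sum>p\<in>?I. Bp p * ?E (P p))"
    unfolding Xd by (simp add: E_sum[OF fI] E_cmult)
  have XC: "X z - ?E X = (\<Sum>p\<in>?I. Bp p * (P p z - ?E (P p)))" for z
    unfolding EX by (simp add: Xd sum_subtractf right_diff_distrib)
  have sq: "(X z - ?E X)^2 = (\<Sum>p\<in>?I. \<Sum>p'\<in>?I. Bp p * Bp p' * ((P p z - ?E (P p)) * (P p' z - ?E (P p'))))" for z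
    unfolding XC power2_eq_square sum_product by (simp add: mult_ac)
  have EV: "?E (\<lambda>z. (X z - ?E X)^2) = (\<Sum>p\<in>?I. \<Sum>p'\<in>?I. Bp p * Bp p' * Cv p p')"
    unfolding sq Cv_def by (simp add: E_sum[OF fI] E_cmult)
  define M where "M = \<zeta>^2 * \<Delta>^2 + \<Delta>^4"
  have M0: "0 \<le> M" unfolding M_def by simp
  have ddb: "\<forall>q\<in>?U. \<bar>dd q\<bar> \<le> \<zeta>"
  proof
    fix q assume q: "q \<in> ?U"
    then show "\<bar>dd q\<bar> \<le> \<zeta>" using gi_in[OF q] h6 unfolding dd_def by blast
  qed
  have cv: "\<bar>Cv p p'\<bar> \<le> (6 * M) * indp p p' + 384 * M / real N" if "p \<in> ?I" "p' \<in> ?I" for p p'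
    using covP[OF ne _ _ _ _ h3 ddb, of "fst p" "snd p" "fst p'" "snd p'"] that
    unfolding Cv_def P_def indp_def M_def by (auto simp: mem_Times_iff)
  have Bsym: "B r s = B s r" for r s
    unfolding B_def by (cases "gi r = gi s") (simp_all add: ac_simps)
  obtain z0 where z0: "z0 \<in> assignments N Q Nq" using ne by blast
  have nN: "n \<le> N"
  proof -
    have "inj_on (unitz N z0) ?U" using unitz_props(2)[OF z0] by (metis inj_onI)
    moreover have "unitz N z0 ` ?U \<subseteq> {..<N}" using unitz_props(1)[OF z0] by auto
    ultimately show ?thesis unfolding n_def using card_inj_on_le[of "unitz N z0" ?U "{..<N}"] by simp
  qed
  have row: "(\<Sum>s\<in>?U. \<bar>B r s\<bar>) \<le> 4 * wbar" if r: "r \<in> ?U" for r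
  proof -
    define g where "g = gi r"
    have g: "g < G" "r \<in> grp g" using gi_in[OF r] unfolding g_def by auto
    let ?S = "grp g"
    have k: "card ?S \<ge> 2" using hcard g by simp
    have wb: "0 \<le> wbar" using hw r by force
    have "(\<Sum>s\<in>?U. \<bar>B r s\<bar>) = (\<Sum>s\<in>?S. \<bar>B r s\<bar>)"
    proof (rule sum.mono_neutral_right[OF finU grp_sub[OF g(1)]])
      show "\<forall>s\<in>?U - ?S. \<bar>B r s\<bar> = 0"
      proof
        fix s assume s: "s \<in> ?U - ?S"
        have "gi s \<noteq> g" using gi_in[of s] s by auto
        then show "\<bar>B r s\<bar> = 0" unfolding B_def g_def by simp
      qed
    qed
    also have "\<dots> \<le> (\<Sum>s\<in>?S. \<Sum>q\<in>?S. wbar * (\<bar>cc g q r\<bar> * \<bar>cc g q s\<bar>))"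
    proof (rule sum_mono)
      fix s assume s: "s \<in> ?S"
      have "gi s = g" using gi_eq[OF g(1) s] .
      then have "B r s = (\<Sum>q\<in>?S. w q * cc g q r * cc g q s)" unfolding B_def g_def by simp
      then have "\<bar>B r s\<bar> \<le> (\<Sum>q\<in>?S. \<bar>w q * cc g q r * cc g q s\<bar>)" using sum_abs by metis
      also have "\<dots> \<le> (\<Sum>q\<in>?S. wbar * (\<bar>cc g q r\<bar> * \<bar>cc g q s\<bar>))"
      proof (rule sum_mono)
        fix q assume q: "q \<in> ?S"
        have "\<bar>w q\<bar> \<le> wbar" using hw grp_sub[OF g(1)] q by auto
        have "\<bar>w q * cc g q r * cc g q s\<bar> = \<bar>w q\<bar> * (\<bar>cc g q r\<bar> * \<bar>cc g q s\<bar>)" by (simp add: abs_mult)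
        also have "\<dots> \<le> wbar * (\<bar>cc g q r\<bar> * \<bar>cc g q s\<bar>)"
          by (rule mult_right_mono) (use \<open>\<bar>w q\<bar> \<le> wbar\<close> in simp_all)
        finally show "\<bar>w q * cc g q r * cc g q s\<bar> \<le> wbar * (\<bar>cc g q r\<bar> * \<bar>cc g q s\<bar>)" .
      qed
      finally show "\<bar>B r s\<bar> \<le> (\<Sum>q\<in>?S. wbar * (\<bar>cc g q r\<bar> * \<bar>cc g q s\<bar>))" .
    qed
    also have "\<dots> = (\<Sum>q\<in>?S. \<Sum>s\<in>?S. wbar * (\<bar>cc g q r\<bar> * \<bar>cc g q s\<bar>))"
      by (rule sum.swap)
    also have "\<dots> = wbar * (\<Sum>q\<in>?S. \<bar>cc g q r\<bar> * (\<Sum>s\<in>?S. \<bar>cc g q s\<bar>))"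
      by (simp add: sum_distrib_left)
    also have "\<dots> \<le> wbar * (\<Sum>q\<in>?S. \<bar>cc g q r\<bar> * 2)"
    proof (rule mult_left_mono[OF sum_mono wb])
      fix q
      have "(\<Sum>s\<in>?S. \<bar>cc g q s\<bar>) \<le> 2" unfolding cc_def by (rule abs_cc_sum(1)[OF grp_fin[OF g(1)] k])
      then show "\<bar>cc g q r\<bar> * (\<Sum>s\<in>?S. \<bar>cc g q s\<bar>) \<le> \<bar>cc g q r\<bar> * 2" by (rule mult_left_mono) simp
    qed
    also have "\<dots> \<le> wbar * (2 * 2)"
    proof -
      have "(\<Sum>q\<in>?S. \<bar>cc g q r\<bar>) \<le> 2" unfolding cc_def by (rule abs_cc_sum(2)[OF grp_fin[OF g(1)] k])
      then have "(\<Sum>q\<in>?S. \<bar>cc g q r\<bar> * 2) \<le> 2 * 2" by (simp add: sum_distrib_right[symmetric])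
      then show ?thesis by (rule mult_left_mono[OF _ wb])
    qed
    finally show ?thesis by simp
  qed
  have QB: "\<bar>\<Sum>p\<in>?I. \<Sum>p'\<in>?I. B (fst p) (snd p) * B (fst p') (snd p') * Cv p p'\<bar>
       \<le> (\<Sum>p\<in>?I. \<bar>B (fst p) (snd p)\<bar>) * (4 * (6 * M) * (4 * wbar) + 384 * M / real N * (\<Sum>p'\<in>?I. \<bar>B (fst p') (snd p')\<bar>))"
    by (rule quad_bound[OF finU Bsym row cv]) (use M0 in auto)
  have SB: "(\<Sum>p\<in>?I. \<bar>B (fst p) (snd p)\<bar>) \<le> (4 * wbar) * real (card ?U)"
    by (rule total_row[OF finU row])
  have wb0: "0 \<le> wbar" if "?U \<noteq> {}" using that hw by force
  have Var: "?E (\<lambda>z. (X z - ?E X)^2) \<le> 6528 * wbar^2 * M * real n"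
  proof (cases "?U = {}")
    case True
    then have "?E (\<lambda>z. (X z - ?E X)^2) = 0" unfolding EV by simp
    then show ?thesis using True n_def by simp
  next
    case Ufalse: False
    have "?E (\<lambda>z. (X z - ?E X)^2) \<le> \<bar>\<Sum>p\<in>?I. \<Sum>p'\<in>?I. B (fst p) (snd p) * B (fst p') (snd p') * Cv p p'\<bar>"
      unfolding EV Bp_def by simp
    also have "\<dots> \<le> 408 * (4 * wbar)^2 * M * real n"
      using QB final_arith[of "\<Sum>p\<in>?I. \<bar>B (fst p) (snd p)\<bar>" "4 * wbar" "real n" M "real N"] SB
        wb0[OF Ufalse] M0 nN unfolding n_def by (auto intro: sum_nonneg)
    also have "\<dots> = 6528 * wbar^2 * M * real n" by (simp add: power2_eq_square)
    finally show ?thesis .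
  qed
  have "prob_cr N Q Nq (\<lambda>z. \<bar>vhat N Y G grp w z - expect_cr N Q Nq (vhat N Y G grp w)\<bar> \<ge> t)
      \<le> ?E (\<lambda>z. (X z - ?E X)^2) / t^2"
    unfolding vXf by (rule chebyshev_cr[OF t])
  also have "\<dots> \<le> 6528 * wbar^2 * M * real n / t^2"
    by (rule divide_right_mono[OF Var]) simp
  also have "\<dots> = 6528 * wbar^2 * (\<Delta>^4 + \<Delta>^2 * \<zeta>^2) * real (card (QU Q Nq)) / t^2"
    unfolding M_def n_def by (simp add: ac_simps)
  finally show ?thesis .
qed

theorem lemmaS14:
  shows "\<exists>C>0. \<forall>(N::nat) (Q::nat) (Nq::nat \<Rightarrow> nat) (Y::nat \<Rightarrow> nat \<Rightarrow> real)
      (G::nat) (grp::nat \<Rightarrow> nat set) (w::nat \<Rightarrow> real) (wbar::real) (\<Delta>::real) (\<zeta>::real) (t::real).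
    (\<forall>q<Q. Nq q \<ge> 1) \<and> (\<Sum>q<Q. Nq q) = N \<and>
    (\<Union>g<G. grp g) = QU Q Nq \<and>
    (\<forall>g<G. \<forall>g'<G. g \<noteq> g' \<longrightarrow> grp g \<inter> grp g' = {}) \<and>
    (\<forall>g<G. card (grp g) \<ge> 2) \<and>
    (\<forall>q<Q. (\<Sum>i<N. (Y i q - Ybar N Y q)^4) / real N \<le> \<Delta>^4) \<and>
    (\<forall>g<G. \<forall>q\<in>grp g. \<bar>Ybar N Y q - Ybar_grp N Y (grp g)\<bar> \<le> \<zeta>) \<and>
    (\<forall>q\<in>QU Q Nq. \<bar>w q\<bar> \<le> wbar) \<and> t > 0
    \<longrightarrow> prob_cr N Q Nq (\<lambda>z. \<bar>vhat N Y G grp w z - expect_cr N Q Nq (vhat N Y G grp w)\<bar> \<ge> t)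
        \<le> C * wbar^2 * (\<Delta>^4 + \<Delta>^2 * \<zeta>^2) * real (card (QU Q Nq)) / t^2"
proof (rule exI[of _ "6528::real"], intro conjI allI impI)
  show "(0::real) < 6528" by simp
next
  fix N Q :: nat and Nq :: "nat \<Rightarrow> nat" and Y :: "nat \<Rightarrow> nat \<Rightarrow> real" and G :: nat
    and grp :: "nat \<Rightarrow> nat set" and w :: "nat \<Rightarrow> real" and wbar \<Delta> \<zeta> t :: real
  assume H: "(\<forall>q<Q. Nq q \<ge> 1) \<and> (\<Sum>q<Q. Nq q) = N \<and>
    (\<Union>g<G. grp g) = QU Q Nq \<and>
    (\<forall>g<G. \<forall>g'<G. g \<noteq> g' \<longrightarrow> grp g \<inter> grp g' = {}) \<and>
    (\<forall>g<G. card (grp g) \<ge> 2) \<and>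
    (\<forall>q<Q. (\<Sum>i<N. (Y i q - Ybar N Y q)^4) / real N \<le> \<Delta>^4) \<and>
    (\<forall>g<G. \<forall>q\<in>grp g. \<bar>Ybar N Y q - Ybar_grp N Y (grp g)\<bar> \<le> \<zeta>) \<and>
    (\<forall>q\<in>QU Q Nq. \<bar>w q\<bar> \<le> wbar) \<and> t > 0"
  show "prob_cr N Q Nq (\<lambda>z. \<bar>vhat N Y G grp w z - expect_cr N Q Nq (vhat N Y G grp w)\<bar> \<ge> t)
        \<le> 6528 * wbar^2 * (\<Delta>^4 + \<Delta>^2 * \<zeta>^2) * real (card (QU Q Nq)) / t^2"
    using H by (elim conjE) (rule main_lemma)
qed

end
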